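(* Let $\{n_1,n_2,\dots,n_k,1\}$ be a canonical sequence (for the measure $P$ below) with $k\ge2$. Then $n_1>n_2>n_3>\cdots>n_{k-1}\ge n_k=1$.
   Context: $P$ is the Borel probability measure on $\mathbb{R}$ with density $f(x)=(3/2)^m$ if $x\in J_m:=[1-\frac{1}{3^{m-1}},1-\frac{2}{3^m}]$ for some $m\in\mathbb{N}=\{1,2,\dots\}$, and $f(x)=0$ otherwise. An optimal set of $n$-means for $P$ is a set $\alpha$ with $\mathrm{card}(\alpha)\le n$ attaining $\inf\{\int\min_{a\in\alpha}(x-a)^2\,dP(x):\mathrm{card}(\alpha)\le n\}$. Canonical sequence: for $n\ge2$ and an optimal set $\alpha_n$ of $n$-means for $P$, there is a (unique) positive integer $k$ with $\alpha_n\cap J_j\neq\emptyset$ for $1\le j\le k$ and $\mathrm{card}(\alpha_n\cap[1-\frac{1}{3^k},1])=1$; with $n_j:=\mathrm{card}(\alpha_n\cap J_j)$ one has $n=n_1+\dots+n_k+1$, and the sequence $\{n_1,n_2,\dots,n_k,1\}$ is called the canonical sequence of order $n$ (associated with $\alpha_n$). *)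

theory Defs
  imports "HOL-Analysis.Analysis"
begin

definition J :: "nat \<Rightarrow> real set" where
  "J m = {1 - 1 / 3 ^ (m - 1) .. 1 - 2 / 3 ^ m}"

definition dens :: "real \<Rightarrow> real" where
  "dens x = (if \<exists>m\<ge>1. x \<in> J m
             then (3 / 2) ^ (THE m. m \<ge> 1 \<and> x \<in> J m) else 0)"

definition P :: "real measure" where
  "P = density lborel (\<lambda>x. ennreal (dens x))"

definition distortion :: "real set \<Rightarrow> ennreal" where
  "distortion \<alpha> = (\<integral>\<^sup>+ x. ennreal (Min ((\<lambda>a. (x - a)\<^sup>2) ` \<alpha>)) \<partial>P)"

definition optimal_n_means :: "nat \<Rightarrow> real set \<Rightarrow> bool" where
  "optimal_n_means n \<alpha> \<longleftrightarrow> finite \<alpha> \<and> \<alpha> \<noteq> {} \<and> card \<alpha> \<le> n \<and>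
     distortion \<alpha> = (INF \<beta>\<in>{\<beta>. finite \<beta> \<and> \<beta> \<noteq> {} \<and> card \<beta> \<le> n}. distortion \<beta>)"

end

theory Submission
  imports Defs
begin

definition Fm :: "real set \<Rightarrow> real \<Rightarrow> real" where
  "Fm A x = Min ((\<lambda>a. (x - a)\<^sup>2) ` A)"
definition wt :: "nat \<Rightarrow> real" where "wt m = (3/2)^m"
definition E :: "real set \<Rightarrow> nat \<Rightarrow> real" where "E A m = integral (J m) (Fm A)"
definition Dr :: "real set \<Rightarrow> real" where "Dr A = (\<Sum>m. wt (Suc m) * E A (Suc m))"

lemma J_Suc: "J (Suc i) = {1 - 1/3^i .. 1 - 2/3^(Suc i)}"
  by (simp add: J_def)

lemma J_disj:
  assumes "i < i'" shows "J (Suc i) \<inter> J (Suc i') = {}"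
proof -
  have "(3::real)^(Suc i) \<le> 3^(i')" using assms by (intro power_increasing) auto
  hence "1/(3::real)^i' \<le> 1/3^(Suc i)" by (simp add: frac_le)
  moreover have "1/(3::real)^(Suc i) < 2/3^(Suc i)" by (simp add: field_simps)
  ultimately have lt: "1 - 2/(3::real)^(Suc i) < 1 - 1/3^i'" by linarith
  { fix x assume "x \<in> J (Suc i)" "x \<in> J (Suc i')"
    hence "x \<le> 1 - 2/(3::real)^(Suc i)" "1 - 1/(3::real)^i' \<le> x" unfolding J_Suc atLeastAtMost_iff by blast+
    hence False using lt by linarith }
  thus ?thesis by blast
qed

lemma J_disj': "m \<ge> 1 \<Longrightarrow> m' \<ge> 1 \<Longrightarrow> m \<noteq> m' \<Longrightarrow> x \<in> J m \<Longrightarrow> x \<in> J m' \<Longrightarrow> False"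
proof -
  assume a: "m \<ge> 1" "m' \<ge> 1" "m \<noteq> m'" "x \<in> J m" "x \<in> J m'"
  obtain i i' where ii: "m = Suc i" "m' = Suc i'" using a by (metis Suc_le_D One_nat_def)
  show False
  proof (cases "i < i'")
    case True thus ?thesis using J_disj[OF True] a ii by blast
  next
    case False hence "i' < i" using a ii by auto
    thus ?thesis using J_disj a ii by blast
  qed
qed

lemma dens_eq: "ennreal (dens x) = (\<Sum>i. ennreal ((3/2)^(Suc i) * indicator (J (Suc i)) x))"
proof (cases "\<exists>m\<ge>1. x \<in> J m")
  case True
  then obtain i where xi: "x \<in> J (Suc i)" by (metis Suc_le_D One_nat_def)
  have the: "(THE m. m \<ge> 1 \<and> x \<in> J m) = Suc i"
  proof (rule the_equality)
    show "Suc i \<ge> 1 \<and> x \<in> J (Suc i)" using xi by simp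
    fix m assume "m \<ge> 1 \<and> x \<in> J m"
    thus "m = Suc i" using J_disj'[of m "Suc i" x] xi by auto
  qed
  have "(\<lambda>j. ennreal ((3/2)^(Suc j) * indicator (J (Suc j)) x)) =
        (\<lambda>j. if j = i then ennreal ((3/2)^(Suc i)) else 0)"
    using xi J_disj'[of _ "Suc i" x] by (auto simp: indicator_def fun_eq_iff)
  moreover have "(\<Sum>j. (if j = i then ennreal ((3/2)^(Suc i)) else 0)) = ennreal ((3/2)^(Suc i))"
    using sums_single[of i "\<lambda>_. ennreal ((3/2)^(Suc i))"] sums_unique by (metis (no_types, lifting))
  ultimately show ?thesis using True the by (simp add: dens_def)
next
  case False
  hence "\<And>j. x \<notin> J (Suc j)" by auto
  thus ?thesis using False by (simp add: dens_def indicator_def)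
qed

lemma Fm_insert: "finite A \<Longrightarrow> A \<noteq> {} \<Longrightarrow> Fm (insert a A) x = min ((x-a)\<^sup>2) (Fm A x)"
  unfolding Fm_def by (simp add: Min_insert)

lemma Fm_single: "Fm {a} x = (x-a)\<^sup>2" unfolding Fm_def by simp

lemma Fm_cont: "finite A \<Longrightarrow> A \<noteq> {} \<Longrightarrow> continuous_on S (Fm A)"
proof (induction A rule: finite_ne_induct)
  case (singleton a) thus ?case unfolding Fm_single[abs_def] by (intro continuous_intros)
next
  case (insert a A)
  have "Fm (insert a A) = (\<lambda>x. min ((x-a)\<^sup>2) (Fm A x))"
    by (rule ext, rule Fm_insert) (use insert.hyps in auto)
  thus ?case using insert by (auto intro!: continuous_intros)
qed

lemma Fm_le: "finite A \<Longrightarrow> a \<in> A \<Longrightarrow> Fm A x \<le> (x-a)\<^sup>2"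
  unfolding Fm_def by (auto intro: Min_le)

lemma Fm_ex: "finite A \<Longrightarrow> A \<noteq> {} \<Longrightarrow> \<exists>a\<in>A. Fm A x = (x-a)\<^sup>2"
proof -
  assume "finite A" "A \<noteq> {}"
  hence "Min ((\<lambda>a. (x - a)\<^sup>2) ` A) \<in> (\<lambda>a. (x - a)\<^sup>2) ` A" by (intro Min_in) auto
  thus ?thesis unfolding Fm_def by auto
qed

lemma Fm_nonneg: "finite A \<Longrightarrow> A \<noteq> {} \<Longrightarrow> 0 \<le> Fm A x"
  by (metis Fm_ex zero_le_power2)

lemma Fm_ge: "finite A \<Longrightarrow> A \<noteq> {} \<Longrightarrow> (\<And>a. a \<in> A \<Longrightarrow> c \<le> (x-a)\<^sup>2) \<Longrightarrow> c \<le> Fm A x"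
  by (metis Fm_ex)

lemma J_sub01: "J (Suc i) \<subseteq> {0..1}"
proof -
  have "1/(3::real)^i \<le> 1" by simp
  moreover have "0 \<le> 2/(3::real)^(Suc i)" by simp
  ultimately show ?thesis unfolding J_Suc by auto
qed

lemma J_len: "1 - 1/(3::real)^i \<le> 1 - 2/3^(Suc i)"
  by (simp add: field_simps)

lemma integrable_Fm: "finite A \<Longrightarrow> A \<noteq> {} \<Longrightarrow> Fm A integrable_on J m"
  unfolding J_def by (intro integrable_continuous_real Fm_cont) auto

lemma E_nonneg: "finite A \<Longrightarrow> A \<noteq> {} \<Longrightarrow> 0 \<le> E A m"
  unfolding E_def by (intro integral_nonneg integrable_Fm Fm_nonneg)

lemma E_bound:
  assumes "finite A" "A \<noteq> {}" "a0 \<in> A"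
  shows "E A (Suc i) \<le> (1 + \<bar>a0\<bar>)\<^sup>2 / 3^(Suc i)"
proof -
  have "E A (Suc i) \<le> integral (J (Suc i)) (\<lambda>x. (1 + \<bar>a0\<bar>)\<^sup>2)"
    unfolding E_def
  proof (rule integral_le[OF integrable_Fm[OF assms(1,2)]])
    show "(\<lambda>x. (1 + \<bar>a0\<bar>)\<^sup>2) integrable_on J (Suc i)" unfolding J_def
      by (intro integrable_continuous_real continuous_intros)
    fix x assume x: "x \<in> J (Suc i)"
    have "x \<in> {0..1}" using J_sub01[of i] x by blast
    hence "0 \<le> x" "x \<le> 1" by auto
    hence "\<bar>x - a0\<bar> \<le> 1 + \<bar>a0\<bar>" by auto
    hence "(x-a0)\<^sup>2 \<le> (1 + \<bar>a0\<bar>)\<^sup>2" by (metis abs_ge_zero power2_abs power_mono)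
    thus "Fm A x \<le> (1 + \<bar>a0\<bar>)\<^sup>2" using Fm_le[OF assms(1,3)] by (meson order_trans)
  qed
  also have "\<dots> = (1 + \<bar>a0\<bar>)\<^sup>2 / 3^(Suc i)"
    using J_len[of i] unfolding J_Suc by (simp add: field_simps)
  finally show ?thesis .
qed

lemma summable_Dr:
  assumes "finite A" "A \<noteq> {}"
  shows "summable (\<lambda>m. wt (Suc m) * E A (Suc m))"
proof -
  obtain a0 where a0: "a0 \<in> A" using assms by auto
  let ?C = "(1 + \<bar>a0\<bar>)\<^sup>2"
  show ?thesis
  proof (rule summable_comparison_test')
    show "summable (\<lambda>m. ?C * (1/2)^(Suc m))" by (intro summable_mult summable_geometric_iff[THEN iffD2] ) auto
    fix m :: nat
    have "norm (wt (Suc m) * E A (Suc m)) = wt (Suc m) * E A (Suc m)"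
      using E_nonneg[OF assms] by (simp add: wt_def)
    also have "\<dots> \<le> wt (Suc m) * (?C / 3^(Suc m))"
      using E_bound[OF assms a0] by (intro mult_left_mono) (auto simp: wt_def)
    also have "\<dots> = ?C * (1/2)^(Suc m)" by (simp add: wt_def power_divide)
    finally show "norm (wt (Suc m) * E A (Suc m)) \<le> ?C * (1/2)^(Suc m)" .
  qed
qed

lemma Fm_meas: "finite A \<Longrightarrow> A \<noteq> {} \<Longrightarrow> Fm A \<in> borel_measurable borel"
  by (intro borel_measurable_continuous_onI Fm_cont)

lemma distortion_eq:
  assumes fin: "finite A" and ne: "A \<noteq> {}"
  shows "distortion A = ennreal (Dr A)"
proof -
  have FmD: "(\<lambda>x. Min ((\<lambda>a. (x - a)\<^sup>2) ` A)) = Fm A" by (simp add: Fm_def fun_eq_iff)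
  have dm: "(\<lambda>x. ennreal (dens x)) = (\<lambda>x. \<Sum>i. ennreal ((3/2)^(Suc i) * indicator (J (Suc i)) x))"
    using dens_eq by auto
  have meas_i: "\<And>i. (\<lambda>x. ennreal ((3/2)^(Suc i) * indicator (J (Suc i)) x)) \<in> borel_measurable lborel"
    unfolding J_def by measurable
  have meas_s: "(\<lambda>x. \<Sum>i. ennreal ((3/2)^(Suc i) * indicator (J (Suc i)) x)) \<in> borel_measurable lborel"
    using meas_i by measurable
  have Fmm: "(\<lambda>x. ennreal (Fm A x)) \<in> borel_measurable lborel"
    using Fm_meas[OF fin ne] by measurable
  have "distortion A = (\<integral>\<^sup>+ x. ennreal (Fm A x) \<partial>P)" by (simp add: distortion_def Fm_def)
  also have "\<dots> = (\<integral>\<^sup>+ x. (\<Sum>i. ennreal ((3/2)^(Suc i) * indicator (J (Suc i)) x)) * ennreal (Fm A x) \<partial>lborel)"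
    unfolding P_def dm by (rule nn_integral_density[OF meas_s Fmm])
  also have "\<dots> = (\<integral>\<^sup>+ x. (\<Sum>i. ennreal ((3/2)^(Suc i) * indicator (J (Suc i)) x) * ennreal (Fm A x)) \<partial>lborel)"
    by simp
  also have "\<dots> = (\<Sum>i. \<integral>\<^sup>+ x. ennreal ((3/2)^(Suc i) * indicator (J (Suc i)) x) * ennreal (Fm A x) \<partial>lborel)"
    by (rule nn_integral_suminf) (use meas_i Fmm in measurable)
  also have "\<dots> = (\<Sum>i. ennreal (wt (Suc i) * E A (Suc i)))"
  proof (rule suminf_cong)
    fix i
    have int: "(Fm A has_integral E A (Suc i)) (J (Suc i))"
      unfolding E_def using integrable_Fm[OF fin ne] by (simp add: has_integral_integral)
    have "(\<integral>\<^sup>+ x. ennreal ((3/2)^(Suc i) * indicator (J (Suc i)) x) * ennreal (Fm A x) \<partial>lborel)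
        = (\<integral>\<^sup>+ x. ennreal ((3/2)^(Suc i)) * ennreal (indicator (J (Suc i)) x * Fm A x) \<partial>lborel)"
      by (intro nn_integral_cong) (simp add: ennreal_mult' Fm_nonneg[OF fin ne] indicator_def)
    also have "\<dots> = ennreal ((3/2)^(Suc i)) * (\<integral>\<^sup>+ x. ennreal (indicator (J (Suc i)) x * Fm A x) \<partial>lborel)"
      using Fm_meas[OF fin ne] by (intro nn_integral_cmult) (unfold J_def, measurable)
    also have "(\<integral>\<^sup>+ x. ennreal (indicator (J (Suc i)) x * Fm A x) \<partial>lborel) = ennreal (E A (Suc i))"
      by (rule nn_integral_has_integral_lebesgue[OF _ int]) (simp add: Fm_nonneg[OF fin ne])
    finally have "(\<integral>\<^sup>+ x. ennreal ((3/2)^(Suc i) * indicator (J (Suc i)) x) * ennreal (Fm A x) \<partial>lborel)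
        = ennreal ((3/2)^(Suc i)) * ennreal (E A (Suc i))" .
    also have "\<dots> = ennreal (wt (Suc i) * E A (Suc i))" unfolding wt_def
      by (rule ennreal_mult[symmetric]) (auto simp: E_nonneg[OF fin ne])
    finally show "(\<integral>\<^sup>+ x. ennreal ((3/2)^(Suc i) * indicator (J (Suc i)) x) * ennreal (Fm A x) \<partial>lborel)
        = ennreal (wt (Suc i) * E A (Suc i))" .
  qed
  also have "\<dots> = ennreal (Dr A)" unfolding Dr_def
  proof (rule suminf_ennreal2)
    show "\<And>i. 0 \<le> wt (Suc i) * E A (Suc i)" using E_nonneg[OF fin ne] by (simp add: wt_def)
    show "summable (\<lambda>i. wt (Suc i) * E A (Suc i))" by (rule summable_Dr[OF fin ne])
  qed
  finally show ?thesis .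
qed

lemma Dr_nonneg: assumes "finite A" "A \<noteq> {}" shows "0 \<le> Dr A"
  unfolding Dr_def using E_nonneg[OF assms] by (intro suminf_nonneg summable_Dr assms) (simp add: wt_def)

lemma opt_Dr:
  assumes "optimal_n_means n \<alpha>" "finite \<beta>" "\<beta> \<noteq> {}" "card \<beta> \<le> n"
  shows "Dr \<alpha> \<le> Dr \<beta>"
proof -
  have a: "finite \<alpha>" "\<alpha> \<noteq> {}" using assms(1) unfolding optimal_n_means_def by auto
  have "distortion \<alpha> \<le> distortion \<beta>" using assms unfolding optimal_n_means_def
    by (metis (mono_tags, lifting) INF_lower mem_Collect_eq)
  thus ?thesis using distortion_eq[OF a] distortion_eq[OF assms(2,3)] Dr_nonneg[OF assms(2,3)]
    by (simp add: ennreal_le_iff)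
qed

lemma J_ivl: "J (Suc i) = {1 - 1/3^i .. 1 - 2/3^(Suc i)} \<and> (1 - 1/(3::real)^i < 1 - 2/3^(Suc i))"
  by (simp add: J_def field_simps)

lemma E_strict:
  assumes fa: "finite A" "A \<noteq> {}" and fb: "finite B" "B \<noteq> {}"
    and le: "\<And>x. x \<in> J (Suc i) \<Longrightarrow> Fm B x \<le> Fm A x"
    and x0: "x0 \<in> J (Suc i)" "Fm B x0 < Fm A x0"
  shows "E B (Suc i) < E A (Suc i)"
proof -
  define lo hi where "lo = 1 - 1/(3::real)^i" and "hi = (1::real) - 2/3^(Suc i)"
  have Jeq: "J (Suc i) = {lo..hi}" and lh: "lo < hi" using J_ivl[of i] by (auto simp: lo_def hi_def)
  have cont: "continuous_on {lo..hi} (\<lambda>x. Fm A x - Fm B x)"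
    using Fm_cont[OF fa] Fm_cont[OF fb] by (intro continuous_intros) auto
  have nn: "\<And>x. x \<in> {lo..hi} \<Longrightarrow> 0 \<le> Fm A x - Fm B x" using le Jeq by auto
  have "integral {lo..hi} (\<lambda>x. Fm A x - Fm B x) \<noteq> 0"
    using integral_eq_0_iff[OF cont lh nn] x0 Jeq by auto
  moreover have "0 \<le> integral {lo..hi} (\<lambda>x. Fm A x - Fm B x)"
    using nn by (intro integral_nonneg integrable_continuous_real cont) auto
  moreover have "integral {lo..hi} (\<lambda>x. Fm A x - Fm B x) = E A (Suc i) - E B (Suc i)"
    unfolding E_def Jeq using integrable_Fm[OF fa, of "Suc i"] integrable_Fm[OF fb, of "Suc i"] Jeq
    by (intro integral_diff) auto
  ultimately show ?thesis by linarith
qed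

lemma E_mono:
  assumes fa: "finite A" "A \<noteq> {}" and fb: "finite B" "B \<noteq> {}"
    and le: "\<And>x. x \<in> J (Suc i) \<Longrightarrow> Fm B x \<le> Fm A x"
  shows "E B (Suc i) \<le> E A (Suc i)"
  unfolding E_def using le by (intro integral_le integrable_Fm fa fb) auto

locale S =
  fixes n k :: nat and \<alpha> :: "real set"
  assumes opt: "optimal_n_means n \<alpha>" and k1: "k \<ge> 1"
    and neJ: "\<forall>j\<in>{1..k}. \<alpha> \<inter> J j \<noteq> {}" and tail1: "card (\<alpha> \<inter> {1 - 1/3^k..1}) = 1"
begin

lemma fin: "finite \<alpha>" and ne: "\<alpha> \<noteq> {}" and card_le: "card \<alpha> \<le> n"
  using opt unfolding optimal_n_means_def by auto

lemma better_False:
  assumes fb: "finite \<beta>" "\<beta> \<noteq> {}" "card \<beta> \<le> n"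
    and le: "\<And>i. E \<beta> (Suc i) \<le> E \<alpha> (Suc i)" and lt: "E \<beta> (Suc i0) < E \<alpha> (Suc i0)"
  shows False
proof -
  have "Dr \<alpha> \<le> Dr \<beta>" by (rule opt_Dr[OF opt fb])
  moreover have "0 < Dr \<alpha> - Dr \<beta>"
  proof -
    have "Dr \<alpha> - Dr \<beta> = (\<Sum>m. wt (Suc m) * E \<alpha> (Suc m) - wt (Suc m) * E \<beta> (Suc m))"
      unfolding Dr_def by (intro suminf_diff summable_Dr fin ne fb)
    also have "0 < \<dots>"
    proof (rule suminf_pos2)
      show "summable (\<lambda>m. wt (Suc m) * E \<alpha> (Suc m) - wt (Suc m) * E \<beta> (Suc m))"
        by (intro summable_diff summable_Dr fin ne fb)
      show "\<And>m. 0 \<le> wt (Suc m) * E \<alpha> (Suc m) - wt (Suc m) * E \<beta> (Suc m)"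
        using le by (simp add: wt_def algebra_simps)
      show "0 < wt (Suc i0) * E \<alpha> (Suc i0) - wt (Suc i0) * E \<beta> (Suc i0)"
        using lt by (simp add: wt_def algebra_simps)
    qed
    finally show ?thesis .
  qed
  ultimately show False by linarith
qed

definition Rg :: "real \<Rightarrow> real set" where
  "Rg a = {x. \<forall>b\<in>\<alpha> - {a}. (x - a)\<^sup>2 < (x - b)\<^sup>2}"

lemma move_pt:
  assumes a: "a \<in> \<alpha>"
  shows "x \<notin> Rg a \<Longrightarrow> Fm (insert a' (\<alpha> - {a})) x \<le> Fm \<alpha> x"
    and "x \<in> Rg a \<Longrightarrow> Fm \<alpha> x = (x - a)\<^sup>2"
    and "Fm (insert a' (\<alpha> - {a})) x \<le> (x - a')\<^sup>2"
proof -
  show "Fm (insert a' (\<alpha> - {a})) x \<le> (x - a')\<^sup>2" using fin by (intro Fm_le) auto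
next
  assume "x \<in> Rg a"
  hence "\<And>b. b \<in> \<alpha> \<Longrightarrow> (x-a)\<^sup>2 \<le> (x-b)\<^sup>2"
  proof -
    fix b assume "x \<in> Rg a" "b \<in> \<alpha>"
    thus "(x-a)\<^sup>2 \<le> (x-b)\<^sup>2" by (cases "b = a") (auto simp: Rg_def less_imp_le)
  qed
  hence "(x-a)\<^sup>2 \<le> Fm \<alpha> x" by (intro Fm_ge fin ne)
  thus "Fm \<alpha> x = (x - a)\<^sup>2" using Fm_le[OF fin a, of x] by linarith
next
  assume "x \<notin> Rg a"
  then obtain b where b: "b \<in> \<alpha>" "b \<noteq> a" "(x - b)\<^sup>2 \<le> (x - a)\<^sup>2" unfolding Rg_def by force
  obtain c where c: "c \<in> \<alpha>" "Fm \<alpha> x = (x - c)\<^sup>2" using Fm_ex[OF fin ne] by blast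
  have "\<exists>d\<in>insert a' (\<alpha> - {a}). (x - d)\<^sup>2 \<le> (x - c)\<^sup>2"
  proof (cases "c = a")
    case True thus ?thesis using b by auto
  next
    case False thus ?thesis using c by auto
  qed
  then obtain d where "d \<in> insert a' (\<alpha> - {a})" "(x - d)\<^sup>2 \<le> (x - c)\<^sup>2" by blast
  thus "Fm (insert a' (\<alpha> - {a})) x \<le> Fm \<alpha> x" using c Fm_le[of "insert a' (\<alpha> - {a})" d x] fin by auto
qed

lemma card_move: "a \<in> \<alpha> \<Longrightarrow> card (insert a' (\<alpha> - {a})) \<le> n"
proof -
  assume a: "a \<in> \<alpha>"
  have "card (insert a' (\<alpha> - {a})) \<le> Suc (card (\<alpha> - {a}))" by (simp add: card_insert_le_m1)
  also have "\<dots> = card \<alpha>" using a fin by (metis card_Suc_Diff1)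
  finally show ?thesis using card_le by linarith
qed

lemma move_False:
  assumes a: "a \<in> \<alpha>"
    and strict: "\<And>i x. x \<in> J (Suc i) \<Longrightarrow> x \<in> Rg a \<Longrightarrow> (x - a')\<^sup>2 < (x - a)\<^sup>2"
  shows False
proof (cases "\<exists>i x. x \<in> J (Suc i) \<and> x \<in> Rg a")
  case True
  then obtain i0 x0 where x0: "x0 \<in> J (Suc i0)" "x0 \<in> Rg a" by blast
  let ?\<beta> = "insert a' (\<alpha> - {a})"
  have fb: "finite ?\<beta>" "?\<beta> \<noteq> {}" using fin by auto
  have ptw: "\<And>x i. x \<in> J (Suc i) \<Longrightarrow> Fm ?\<beta> x \<le> Fm \<alpha> x"
  proof -
    fix x i assume x: "x \<in> J (Suc i)"
    show "Fm ?\<beta> x \<le> Fm \<alpha> x"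
    proof (cases "x \<in> Rg a")
      case True
      thus ?thesis using move_pt(2)[OF a, of x] move_pt(3)[OF a, of a' x] strict[OF x True] by linarith
    next
      case False thus ?thesis using move_pt(1)[OF a, of x a'] by blast
    qed
  qed
  have lt: "Fm ?\<beta> x0 < Fm \<alpha> x0" using move_pt(2)[OF a x0(2)] move_pt(3)[OF a, of a' x0] strict[OF x0] by linarith
  have "E ?\<beta> (Suc i0) < E \<alpha> (Suc i0)" by (rule E_strict[OF fin ne fb _ x0(1) lt]) (rule ptw)
  moreover have Emono: "\<And>i. E ?\<beta> (Suc i) \<le> E \<alpha> (Suc i)" by (rule E_mono[OF fin ne fb]) (rule ptw)
  ultimately show False using better_False[OF fb card_move[OF a]] by blast
next
  case False
  have "infinite (J (Suc 0))" using J_ivl[of 0] by (simp add: J_def)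
  then obtain x0 where x0: "x0 \<in> J (Suc 0)" "x0 \<notin> \<alpha>" using fin by (meson finite_subset subsetI)
  let ?\<beta> = "insert x0 (\<alpha> - {a})"
  have fb: "finite ?\<beta>" "?\<beta> \<noteq> {}" using fin by auto
  have ptw: "\<And>x i. x \<in> J (Suc i) \<Longrightarrow> Fm ?\<beta> x \<le> Fm \<alpha> x"
    using move_pt[OF a] False by blast
  have "0 < Fm \<alpha> x0"
  proof -
    obtain c where c: "c \<in> \<alpha>" "Fm \<alpha> x0 = (x0 - c)\<^sup>2" using Fm_ex[OF fin ne] by blast
    thus ?thesis using x0 by auto
  qed
  moreover have "Fm ?\<beta> x0 \<le> 0" using move_pt(3)[OF a, of x0 x0] by simp
  ultimately have lt: "Fm ?\<beta> x0 < Fm \<alpha> x0" by linarith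
  have "E ?\<beta> (Suc 0) < E \<alpha> (Suc 0)" by (rule E_strict[OF fin ne fb _ x0(1) lt]) (rule ptw)
  moreover have Emono: "\<And>i. E ?\<beta> (Suc i) \<le> E \<alpha> (Suc i)" by (rule E_mono[OF fin ne fb]) (rule ptw)
  ultimately show False using better_False[OF fb card_move[OF a]] by blast
qed

end

definition lo :: "nat \<Rightarrow> real" where "lo i = 1 - 1/3^i"
definition hi :: "nat \<Rightarrow> real" where "hi i = 1 - 2/3^(Suc i)"
definition hh :: "nat \<Rightarrow> real" where "hh i = 1/3^(Suc i)"

lemma J_lohi: "J (Suc i) = {lo i..hi i}" by (simp add: J_def lo_def hi_def)
lemma hi_eq: "hi i = lo i + hh i" by (simp add: lo_def hi_def hh_def field_simps)
lemma lo_Suc: "lo (Suc i) = hi i + hh i" by (simp add: lo_def hi_def hh_def field_simps)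
lemma hh_Suc: "hh (Suc i) = hh i / 3" by (simp add: hh_def)
lemma hh_pos: "0 < hh i" by (simp add: hh_def)
lemma lo_lt_hi: "lo i < hi i" using hi_eq hh_pos by (metis less_add_same_cancel1)
lemma lo_mono: "i \<le> i' \<Longrightarrow> lo i \<le> lo i'"
proof -
  assume "i \<le> i'"
  hence "(3::real)^i \<le> 3^i'" by (intro power_increasing) auto
  hence "1/(3::real)^i' \<le> 1/3^i" by (simp add: frac_le)
  thus ?thesis by (simp add: lo_def)
qed
lemma hh_anti: "i \<le> i' \<Longrightarrow> hh i' \<le> hh i"
proof -
  assume "i \<le> i'"
  hence "(3::real)^(Suc i) \<le> 3^(Suc i')" by (intro power_increasing) auto
  hence "1/(3::real)^(Suc i') \<le> 1/3^(Suc i)" by (simp add: frac_le)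
  thus ?thesis by (simp add: hh_def)
qed
lemma hi_mono: "i \<le> i' \<Longrightarrow> hi i \<le> hi i'"
proof -
  assume "i \<le> i'"
  hence "(3::real)^(Suc i) \<le> 3^(Suc i')" by (intro power_increasing) auto
  hence "2/(3::real)^(Suc i') \<le> 2/3^(Suc i)" by (simp add: frac_le)
  thus ?thesis by (simp add: hi_def)
qed
lemma lo_ge0: "0 \<le> lo i" by (simp add: lo_def)
lemma hi_lt1: "hi i < 1" by (simp add: hi_def)
lemma lo_lt1: "lo i < 1" by (simp add: lo_def)
lemma one_minus_lo: "1 - lo (Suc i) = 3 * hh (Suc i)" by (simp add: lo_def hh_def field_simps)
lemma one_minus_lo': "1 - lo i = 3 * hh i" by (simp add: lo_def hh_def field_simps)
lemma lo_Suc_le: "i < i' \<Longrightarrow> hi i + hh i \<le> lo i'" using lo_Suc lo_mono by (metis Suc_leI)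
lemma J_le_hi: "x \<in> J (Suc i') \<Longrightarrow> i' \<le> i \<Longrightarrow> x \<le> hi i"
  using hi_mono J_lohi by fastforce
lemma J_ge_lo: "x \<in> J (Suc i') \<Longrightarrow> i \<le> i' \<Longrightarrow> lo i \<le> x"
  using lo_mono J_lohi by fastforce

lemma sq_lt_iff: "((x::real) - a)\<^sup>2 < (x - b)\<^sup>2 \<longleftrightarrow> (b < a \<and> (a + b)/2 < x) \<or> (a < b \<and> x < (a + b)/2)"
proof -
  have "(x - b)\<^sup>2 - (x - a)\<^sup>2 = (a - b) * (2*x - a - b)" by (simp add: power2_eq_square algebra_simps)
  hence "(x - a)\<^sup>2 < (x - b)\<^sup>2 \<longleftrightarrow> 0 < (a - b) * (2*x - a - b)" by linarith
  also have "\<dots> \<longleftrightarrow> (b < a \<and> (a + b)/2 < x) \<or> (a < b \<and> x < (a + b)/2)"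
    unfolding zero_less_mult_iff by auto
  finally show ?thesis .
qed

lemma sq_le_dist: "\<bar>(x::real) - y\<bar> \<le> d \<Longrightarrow> d \<le> \<bar>x - a\<bar> \<Longrightarrow> (x - y)\<^sup>2 \<le> (x - a)\<^sup>2"
proof -
  assume "\<bar>x - y\<bar> \<le> d" "d \<le> \<bar>x - a\<bar>"
  hence "\<bar>x - y\<bar> \<le> \<bar>x - a\<bar>" by linarith
  thus ?thesis by (simp add: abs_le_square_iff)
qed

lemma int_sq: fixes s t c :: real shows "s \<le> t \<Longrightarrow> integral {s..t} (\<lambda>x. (x - c)\<^sup>2) = ((t - c)^3 - (s - c)^3) / 3"
proof -
  assume st: "s \<le> t"
  have "((\<lambda>x. (x - c)\<^sup>2) has_integral ((\<lambda>x. (x - c)^3/3) t - (\<lambda>x. (x - c)^3/3) s)) {s..t}"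
  proof (rule fundamental_theorem_of_calculus[OF st, of "\<lambda>x. (x - c)^3/3" "\<lambda>x. (x - c)\<^sup>2"])
    fix x assume "x \<in> {s..t}"
    have "((\<lambda>x. (x - c)^3/3) has_real_derivative (x - c)\<^sup>2) (at x within {s..t})"
      by (auto intro!: derivative_eq_intros simp: power2_eq_square)
    thus "((\<lambda>x. (x - c)^3/3) has_vector_derivative (x - c)\<^sup>2) (at x within {s..t})"
      by (simp add: has_real_derivative_iff_has_vector_derivative)
  qed
  thus ?thesis by (simp add: integral_unique diff_divide_distrib)
qed

lemma int_piece_bound:
  fixes f g q :: "real \<Rightarrow> real"
  assumes cf: "continuous_on {l..r} f" and cg: "continuous_on {l..r} g" and cq: "continuous_on {s..t} q"
    and ord: "l \<le> s" "s \<le> t" "t \<le> r"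
    and pt: "\<And>x. x \<in> {l..r} \<Longrightarrow> x \<noteq> s \<Longrightarrow> x \<noteq> t \<Longrightarrow> f x \<le> g x + (if x \<in> {s..t} then q x else 0)"
  shows "integral {l..r} f \<le> integral {l..r} g + integral {s..t} q"
proof -
  define G where "G x = g x + (if x \<in> {s..t} then q x else 0)" for x
  define F where "F x = (if x \<in> {s,t} then G x else f x)" for x
  have iq: "(\<lambda>x. if x \<in> {s..t} then q x else 0) integrable_on {l..r}"
  proof -
    have "q integrable_on ({s..t} \<inter> {l..r})" using ord cq
      by (metis inf.absorb_iff1 atLeastatMost_subset_iff integrable_continuous_real)
    thus ?thesis using integrable_restrict_Int by blast
  qed
  have iG: "G integrable_on {l..r}" unfolding G_def
    by (rule integrable_add[OF integrable_continuous_real[OF cg] iq])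
  have if_: "f integrable_on {l..r}" using cf by (rule integrable_continuous_real)
  have iF: "F integrable_on {l..r}"
    by (rule integrable_spike_finite[of "{s,t}" _ _ f]) (auto simp: F_def if_)
  have "integral {l..r} f = integral {l..r} F"
    by (rule integral_spike[of "{s,t}"]) (auto simp: F_def)
  also have "\<dots> \<le> integral {l..r} G"
    using pt by (intro integral_le iF iG) (auto simp: F_def G_def)
  also have "\<dots> = integral {l..r} g + integral {l..r} (\<lambda>x. if x \<in> {s..t} then q x else 0)"
    unfolding G_def by (rule integral_add[OF integrable_continuous_real[OF cg] iq])
  also have "integral {l..r} (\<lambda>x. if x \<in> {s..t} then q x else 0) = integral {s..t} q"
  proof -
    have "{s..t} \<inter> {l..r} = {s..t}" using ord by auto
    hence "integral {l..r} (\<lambda>x. if x \<in> {s..t} then q x else 0) = integral {s..t} q"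
      using integral_restrict_Int[of "{l..r}" "{s..t}" q] by metis
    thus ?thesis by simp
  qed
  finally show ?thesis .
qed

context S begin

lemma Rg_iff: "x \<in> Rg a \<longleftrightarrow> (\<forall>b\<in>\<alpha> - {a}. (b < a \<longrightarrow> (a + b)/2 < x) \<and> (a < b \<longrightarrow> x < (a + b)/2))"
proof -
  have "\<And>b. b \<in> \<alpha> - {a} \<Longrightarrow> (b < a \<and> (a + b)/2 < x \<or> a < b \<and> x < (a + b)/2) \<longleftrightarrow>
      ((b < a \<longrightarrow> (a + b)/2 < x) \<and> (a < b \<longrightarrow> x < (a + b)/2))"
  proof -
    fix b assume "b \<in> \<alpha> - {a}"
    hence "b < a \<or> a < b" by auto
    thus "(b < a \<and> (a + b)/2 < x \<or> a < b \<and> x < (a + b)/2) \<longleftrightarrow>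
      ((b < a \<longrightarrow> (a + b)/2 < x) \<and> (a < b \<longrightarrow> x < (a + b)/2))" by auto
  qed
  thus ?thesis unfolding Rg_def sq_lt_iff mem_Collect_eq by (meson ball_cong)
qed

lemma Rg_convex: "x1 \<in> Rg a \<Longrightarrow> x2 \<in> Rg a \<Longrightarrow> x1 \<le> y \<Longrightarrow> y \<le> x2 \<Longrightarrow> y \<in> Rg a"
  unfolding Rg_iff by fastforce

lemma a_in_Rg: "a \<in> \<alpha> \<Longrightarrow> a \<in> Rg a" unfolding Rg_iff by auto

lemma guard: "a \<in> \<alpha> \<Longrightarrow> y \<in> \<alpha> \<Longrightarrow> y \<noteq> a \<Longrightarrow> (x - y)\<^sup>2 \<le> (x - a)\<^sup>2 \<Longrightarrow> x \<notin> Rg a"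
proof
  assume "y \<in> \<alpha>" "y \<noteq> a" "(x - y)\<^sup>2 \<le> (x - a)\<^sup>2" "x \<in> Rg a"
  hence "(x - a)\<^sup>2 < (x - y)\<^sup>2" unfolding Rg_def by auto
  thus False using \<open>(x - y)\<^sup>2 \<le> (x - a)\<^sup>2\<close> by linarith
qed

lemma tailset: "{1 - 1/3^k..1} = {lo k..1}" by (simp add: lo_def)

definition c where "c = (THE c. \<alpha> \<inter> {lo k..1} = {c})"

lemma c_prop: "\<alpha> \<inter> {lo k..1} = {c}"
proof -
  have "card (\<alpha> \<inter> {lo k..1}) = 1" using tail1 tailset by simp
  then obtain c0 where c0: "\<alpha> \<inter> {lo k..1} = {c0}" by (rule card_1_singletonE)
  have "c = c0" unfolding c_def by (rule the_equality) (use c0 in auto)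
  thus ?thesis using c0 by simp
qed

lemma c_in: "c \<in> \<alpha>" "lo k \<le> c" "c \<le> 1" using c_prop by auto
lemma c_uniq: "a \<in> \<alpha> \<Longrightarrow> lo k \<le> a \<Longrightarrow> a \<le> 1 \<Longrightarrow> a = c"
proof -
  assume "a \<in> \<alpha>" "lo k \<le> a" "a \<le> 1"
  hence "a \<in> \<alpha> \<inter> {lo k..1}" by simp
  thus "a = c" using c_prop by simp
qed

lemma ptJ: "i < k \<Longrightarrow> \<exists>y\<in>\<alpha>. y \<in> J (Suc i)"
  using neJ by (metis Int_emptyI Suc_leI atLeastAtMost_iff le_add1 plus_1_eq_Suc)

lemma lo_k: "lo k = hi (k - 1) + hh (k - 1)" using k1 lo_Suc by (metis Suc_diff_1 le_numeral_extra(2) less_le_trans zero_less_one)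

lemma guardJ:
  assumes a: "a \<in> \<alpha>" and i': "i' < k" and far: "a \<le> lo i' - hh i' \<or> hi i' + hh i' \<le> a"
    and x: "x \<in> J (Suc i')"
  shows "x \<notin> Rg a"
proof -
  obtain y where y: "y \<in> \<alpha>" "y \<in> J (Suc i')" using ptJ[OF i'] by blast
  have xy: "\<bar>x - y\<bar> \<le> hh i'" using x y(2) hi_eq[of i'] J_lohi by auto
  have xa: "hh i' \<le> \<bar>x - a\<bar>" using far x hi_eq[of i'] J_lohi by auto
  have "y \<noteq> a" using far y(2) J_lohi hh_pos[of i'] hi_eq[of i'] by auto
  thus ?thesis using guard[OF a y(1) _ sq_le_dist[OF xy xa]] by blast
qed

lemma guardT:
  assumes a: "a \<in> \<alpha>" and i': "k \<le> i'" and far: "a \<le> lo k - 3 * hh k" and x: "x \<in> J (Suc i')"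
  shows "x \<notin> Rg a"
proof -
  have x1: "lo k \<le> x" "x \<le> 1" using J_ge_lo[OF x i'] x J_lohi hi_lt1[of i'] by auto
  have xy: "\<bar>x - c\<bar> \<le> 3 * hh k" using x1 c_in one_minus_lo'[of k] by auto
  have xa: "3 * hh k \<le> \<bar>x - a\<bar>" using far x1 by auto
  have "c \<noteq> a" using far c_in hh_pos[of k] by auto
  thus ?thesis using guard[OF a c_in(1) _ sq_le_dist[OF xy xa]] by blast
qed

lemma hh_k: "3 * hh k = hh (k - 1)" using k1 hh_Suc by (metis Suc_diff_1 less_le_trans nonzero_mult_div_cancel_left zero_less_one times_divide_eq_right divide_self_if mult.commute zero_neq_numeral)

lemma piece_only:
  assumes a: "a \<in> \<alpha>" "a \<in> J (Suc i)" and i: "i < k" and i': "i' \<noteq> i" and x: "x \<in> J (Suc i')"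
  shows "x \<notin> Rg a"
proof -
  have alh: "lo i \<le> a" "a \<le> hi i" using a J_lohi by auto
  consider "i' < i" | "i < i' \<and> i' < k" | "k \<le> i'" using i' by linarith
  thus ?thesis
  proof cases
    case 1
    have "hi i' + hh i' \<le> lo i" using lo_Suc_le[OF 1] .
    thus ?thesis using guardJ[OF a(1) _ _ x] 1 i alh by auto
  next
    case 2
    have "hi i + hh i \<le> lo i'" using lo_Suc_le 2 by blast
    moreover have "hh i' \<le> hh i" using hh_anti 2 by auto
    ultimately show ?thesis using guardJ[OF a(1) _ _ x] 2 alh by auto
  next
    case 3
    have "hi i \<le> hi (k - 1)" using i hi_mono by auto
    hence "a \<le> lo k - 3 * hh k" using alh lo_k hh_k by linarith
    thus ?thesis using guardT[OF a(1) 3 _ x] by blast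
  qed
qed

lemma nonneg_pts: "a \<in> \<alpha> \<Longrightarrow> 0 \<le> a"
proof (rule ccontr)
  assume a: "a \<in> \<alpha>" "\<not> 0 \<le> a"
  show False
  proof (rule move_False[OF a(1), of 0])
    fix i x assume "x \<in> J (Suc i)"
    hence "0 \<le> x" using J_lohi lo_ge0[of i] by auto
    thus "(x - 0)\<^sup>2 < (x - a)\<^sup>2" using a(2) by (simp add: power2_eq_square algebra_simps mult_less_0_iff)
  qed
qed

lemma le1_pts: "a \<in> \<alpha> \<Longrightarrow> a \<le> 1"
proof (rule ccontr)
  assume a: "a \<in> \<alpha>" "\<not> a \<le> 1"
  show False
  proof (rule move_False[OF a(1), of 1])
    fix i x assume "x \<in> J (Suc i)"
    hence "x \<le> 1" using J_lohi hi_lt1[of i] by auto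
    thus "(x - 1)\<^sup>2 < (x - a)\<^sup>2" using a(2) by (simp add: sq_lt_iff)
  qed
qed

lemma mid_lemma:
  assumes a: "a \<in> \<alpha>" and st: "lo i \<le> s" "s < t" "t \<le> hi i"
    and in1: "\<And>x. x \<in> J (Suc i) \<Longrightarrow> x \<in> Rg a \<Longrightarrow> s \<le> x \<and> x \<le> t"
    and in2: "\<And>x. s < x \<Longrightarrow> x < t \<Longrightarrow> x \<in> Rg a"
    and oth: "\<And>i' x. i' \<noteq> i \<Longrightarrow> x \<in> J (Suc i') \<Longrightarrow> x \<notin> Rg a"
  shows "a = (s + t)/2"
proof (rule ccontr)
  assume ne_m: "a \<noteq> (s + t)/2"
  define m where "m = (s + t)/2"
  let ?\<beta> = "insert m (\<alpha> - {a})"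
  have fb: "finite ?\<beta>" "?\<beta> \<noteq> {}" using fin by auto
  have le: "\<And>i'. i' \<noteq> i \<Longrightarrow> E ?\<beta> (Suc i') \<le> E \<alpha> (Suc i')"
    by (rule E_mono[OF fin ne fb]) (use move_pt(1)[OF a] oth in blast)
  have "E ?\<beta> (Suc i) \<le> E \<alpha> (Suc i) + integral {s..t} (\<lambda>x. (x - m)\<^sup>2 - (x - a)\<^sup>2)"
    unfolding E_def J_lohi
  proof (rule int_piece_bound)
    show "continuous_on {lo i..hi i} (Fm ?\<beta>)" by (rule Fm_cont[OF fb])
    show "continuous_on {lo i..hi i} (Fm \<alpha>)" by (rule Fm_cont[OF fin ne])
    show "continuous_on {s..t} (\<lambda>x. (x - m)\<^sup>2 - (x - a)\<^sup>2)" by (intro continuous_intros)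
    show "lo i \<le> s" "s \<le> t" "t \<le> hi i" using st by auto
    fix x assume x: "x \<in> {lo i..hi i}" "x \<noteq> s" "x \<noteq> t"
    show "Fm ?\<beta> x \<le> Fm \<alpha> x + (if x \<in> {s..t} then (x - m)\<^sup>2 - (x - a)\<^sup>2 else 0)"
    proof (cases "x \<in> {s..t}")
      case True
      hence "x \<in> Rg a" using in2 x by auto
      thus ?thesis using True move_pt(2)[OF a] move_pt(3)[OF a, of m x] by auto
    next
      case False
      hence "x \<notin> Rg a" using in1 x J_lohi by auto
      thus ?thesis using False move_pt(1)[OF a, of x m] by auto
    qed
  qed
  also have "integral {s..t} (\<lambda>x. (x - m)\<^sup>2 - (x - a)\<^sup>2) =
     integral {s..t} (\<lambda>x. (x - m)\<^sup>2) - integral {s..t} (\<lambda>x. (x - a)\<^sup>2)"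
    by (rule integral_diff) (auto intro!: integrable_continuous_real continuous_intros)
  also have "\<dots> = ((t - m)^3 - (s - m)^3) / 3 - ((t - a)^3 - (s - a)^3) / 3"
    using st int_sq[of s t m] int_sq[of s t a] by linarith
  also have "\<dots> = - (t - s) * (a - m)\<^sup>2" unfolding m_def by (simp add: power2_eq_square power3_eq_cube algebra_simps divide_simps)
  finally have bnd: "E ?\<beta> (Suc i) \<le> E \<alpha> (Suc i) + - (t - s) * (a - m)\<^sup>2" .
  have "0 < (t - s) * (a - m)\<^sup>2" using st ne_m by (intro mult_pos_pos) (auto simp: m_def)
  hence "E ?\<beta> (Suc i) < E \<alpha> (Suc i)" using bnd by linarith
  moreover have "\<And>i'. E ?\<beta> (Suc i') \<le> E \<alpha> (Suc i')" using le calculation by (metis less_imp_le)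
  ultimately show False using better_False[OF fb card_move[OF a]] by blast
qed

end

context S begin

lemma two_sided:
  assumes g: "g \<in> \<alpha>" "hi i < g" "g < lo (Suc i)"
  shows "hi i \<in> Rg g \<and> lo (Suc i) \<in> Rg g"
proof -
  have L: "\<exists>i1 x1. i1 \<le> i \<and> x1 \<in> J (Suc i1) \<and> x1 \<in> Rg g"
  proof (rule ccontr)
    assume nL: "\<not> ?thesis"
    show False
    proof (rule move_False[OF g(1), of "lo (Suc i)"])
      fix i' x assume x: "x \<in> J (Suc i')" "x \<in> Rg g"
      hence "Suc i \<le> i'" using nL by (metis not_less_eq_eq)
      hence "lo (Suc i) \<le> x" using J_ge_lo[OF x(1)] by blast
      thus "(x - lo (Suc i))\<^sup>2 < (x - g)\<^sup>2" using g by (simp add: sq_lt_iff)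
    qed
  qed
  have R: "\<exists>i2 x2. Suc i \<le> i2 \<and> x2 \<in> J (Suc i2) \<and> x2 \<in> Rg g"
  proof (rule ccontr)
    assume nR: "\<not> ?thesis"
    show False
    proof (rule move_False[OF g(1), of "hi i"])
      fix i' x assume x: "x \<in> J (Suc i')" "x \<in> Rg g"
      hence "i' \<le> i" using nR by (metis not_less_eq_eq)
      hence "x \<le> hi i" using J_le_hi[OF x(1)] by blast
      thus "(x - hi i)\<^sup>2 < (x - g)\<^sup>2" using g by (simp add: sq_lt_iff)
    qed
  qed
  obtain i1 x1 where 1: "i1 \<le> i" "x1 \<in> J (Suc i1)" "x1 \<in> Rg g" using L by blast
  obtain i2 x2 where 2: "Suc i \<le> i2" "x2 \<in> J (Suc i2)" "x2 \<in> Rg g" using R by blast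
  have "x1 \<le> hi i" using J_le_hi[OF 1(2,1)] .
  moreover have "lo (Suc i) \<le> x2" using J_ge_lo[OF 2(2,1)] .
  ultimately show ?thesis using Rg_convex[OF 1(3) 2(3)] g by auto
qed

lemma left_bound:
  assumes g: "g \<in> \<alpha>" "hi i < g" "g < lo (Suc i)" and i: "i < k"
  shows "g < hi i + hh i / 2"
proof -
  have two: "hi i \<in> Rg g" using two_sided[OF g] by blast
  define L where "L = {b \<in> \<alpha>. b < g}"
  obtain y where y: "y \<in> \<alpha>" "y \<in> J (Suc i)" using ptJ[OF i] by blast
  have yL: "y \<in> L" using y g J_lohi unfolding L_def by auto
  have finL: "finite L" using fin unfolding L_def by auto
  define a where "a = Max L"
  have aL: "a \<in> L" unfolding a_def using finL yL by (intro Max_in) auto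
  have a: "a \<in> \<alpha>" "a < g" using aL unfolding L_def by auto
  have amax: "\<And>b. b \<in> \<alpha> \<Longrightarrow> b < g \<Longrightarrow> b \<le> a" unfolding a_def using finL L_def by (intro Max_ge) auto
  have "(g + a)/2 < hi i" using two a unfolding Rg_iff by auto
  hence a_hi: "a < 2 * hi i - g" by (simp add: field_simps)
  have a_lo: "lo i \<le> a" using amax[OF y(1)] y(2) J_lohi g by auto
  have aJ: "a \<in> J (Suc i)" using a_lo a_hi g J_lohi by auto
  define SS where "SS = insert (lo i) ((\<lambda>b. (a + b)/2) ` {b \<in> \<alpha>. b < a})"
  define s where "s = Max SS"
  define t where "t = (a + g)/2"
  have finS: "finite SS" using fin unfolding SS_def by auto
  have s_ge: "lo i \<le> s" unfolding s_def SS_def using finS SS_def by (intro Max_ge) auto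
  have s_le_a: "s \<le> a" unfolding s_def using finS a_lo by (subst Max_le_iff) (auto simp: SS_def)
  have ss: "\<And>b. b \<in> \<alpha> \<Longrightarrow> b < a \<Longrightarrow> (a + b)/2 \<le> s" unfolding s_def using finS by (intro Max_ge) (auto simp: SS_def)
  have above: "\<And>b. b \<in> \<alpha> \<Longrightarrow> a < b \<Longrightarrow> g \<le> b" using amax by (meson not_le)
  have "a = (s + t)/2"
  proof (rule mid_lemma[OF a(1) s_ge])
    show "s < t" using s_le_a a unfolding t_def by argo
    show "t \<le> hi i" using a_hi unfolding t_def by argo
    fix x
    { assume x: "x \<in> J (Suc i)" "x \<in> Rg a"
      have "\<And>b. b \<in> SS \<Longrightarrow> b \<le> x"
      proof -
        fix b assume "b \<in> SS"
        then consider "b = lo i" | b' where "b' \<in> \<alpha>" "b' < a" "b = (a + b')/2" unfolding SS_def by auto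
        thus "b \<le> x"
        proof cases
          case 1 thus ?thesis using x J_lohi by auto
        next
          case 2 thus ?thesis using x(2) unfolding Rg_iff by force
        qed
      qed
      hence "s \<le> x" unfolding s_def using finS by (subst Max_le_iff) (auto simp: SS_def)
      moreover have "x < t" using x(2) a g(1) unfolding Rg_iff t_def by auto
      ultimately show "s \<le> x \<and> x \<le> t" by auto }
    { assume x: "s < x" "x < t"
      show "x \<in> Rg a" unfolding Rg_iff
      proof (intro ballI conjI impI)
        fix b assume b: "b \<in> \<alpha> - {a}"
        { assume "b < a" thus "(a + b)/2 < x" using ss[of b] b x by auto }
        { assume "a < b" hence "g \<le> b" using above b by auto
          thus "x < (a + b)/2" using x unfolding t_def by auto }
      qed }
    { fix i' assume "i' \<noteq> i" "x \<in> J (Suc i')"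
      thus "x \<notin> Rg a" using piece_only[OF a(1) aJ i] by blast }
  qed
  hence "3 * a = 2 * s + g" unfolding t_def by argo
  thus ?thesis using s_ge a_hi hi_eq[of i] by argo
qed

lemma right_bound:
  assumes g: "g \<in> \<alpha>" "hi i < g" "g < lo (Suc i)" and i: "Suc i < k"
  shows "lo (Suc i) - hh i / 6 < g"
proof -
  have two: "lo (Suc i) \<in> Rg g" using two_sided[OF g] by blast
  define L where "L = {b \<in> \<alpha>. g < b}"
  obtain y where y: "y \<in> \<alpha>" "y \<in> J (Suc (Suc i))" using ptJ[OF i] by blast
  have yL: "y \<in> L" using y g J_lohi unfolding L_def by auto
  have finL: "finite L" using fin unfolding L_def by auto
  define b where "b = Min L"
  have bL: "b \<in> L" unfolding b_def using finL yL by (intro Min_in) auto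
  have b: "b \<in> \<alpha>" "g < b" using bL unfolding L_def by auto
  have bmin: "\<And>b'. b' \<in> \<alpha> \<Longrightarrow> g < b' \<Longrightarrow> b \<le> b'" unfolding b_def using finL L_def by (intro Min_le) auto
  have "lo (Suc i) < (g + b)/2" using two b unfolding Rg_iff by auto
  hence b_lo: "2 * lo (Suc i) - g < b" by (simp add: field_simps)
  have b_hi: "b \<le> hi (Suc i)" using bmin[OF y(1)] y(2) J_lohi g by auto
  have bJ: "b \<in> J (Suc (Suc i))" using b_lo b_hi g J_lohi by auto
  define TT where "TT = insert (hi (Suc i)) ((\<lambda>b'. (b + b')/2) ` {b' \<in> \<alpha>. b < b'})"
  define t where "t = Min TT"
  define s where "s = (g + b)/2"
  have finT: "finite TT" using fin unfolding TT_def by auto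
  have t_le: "t \<le> hi (Suc i)" unfolding t_def TT_def using finT TT_def by (intro Min_le) auto
  have t_ge_b: "b \<le> t" unfolding t_def using finT b_hi by (subst Min_ge_iff) (auto simp: TT_def)
  have tt: "\<And>b'. b' \<in> \<alpha> \<Longrightarrow> b < b' \<Longrightarrow> t \<le> (b + b')/2" unfolding t_def using finT by (intro Min_le) (auto simp: TT_def)
  have below: "\<And>b'. b' \<in> \<alpha> \<Longrightarrow> b' < b \<Longrightarrow> b' \<le> g" using bmin by (meson not_le)
  have "b = (s + t)/2"
  proof (rule mid_lemma[OF b(1)])
    show "lo (Suc i) \<le> s" using b_lo unfolding s_def by argo
    show "s < t" using t_ge_b b unfolding s_def by argo
    show "t \<le> hi (Suc i)" by (rule t_le)
    fix x
    { assume x: "x \<in> J (Suc (Suc i))" "x \<in> Rg b"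
      have "\<And>y. y \<in> TT \<Longrightarrow> x \<le> y"
      proof -
        fix y assume "y \<in> TT"
        then consider "y = hi (Suc i)" | b' where "b' \<in> \<alpha>" "b < b'" "y = (b + b')/2" unfolding TT_def by auto
        thus "x \<le> y"
        proof cases
          case 1 thus ?thesis using x J_lohi by auto
        next
          case 2 thus ?thesis using x(2) unfolding Rg_iff by force
        qed
      qed
      hence "x \<le> t" unfolding t_def using finT by (subst Min_ge_iff) (auto simp: TT_def)
      moreover have "s < x" using x(2) b g(1) unfolding Rg_iff s_def by auto
      ultimately show "s \<le> x \<and> x \<le> t" by auto }
    { assume x: "s < x" "x < t"
      show "x \<in> Rg b" unfolding Rg_iff
      proof (intro ballI conjI impI)
        fix b' assume b': "b' \<in> \<alpha> - {b}"
        { assume "b < b'" thus "x < (b + b')/2" using tt[of b'] b' x by auto }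
        { assume "b' < b" hence "b' \<le> g" using below b' by auto
          thus "(b + b')/2 < x" using x unfolding s_def by auto }
      qed }
    { fix i' assume "i' \<noteq> Suc i" "x \<in> J (Suc i')"
      thus "x \<notin> Rg b" using piece_only[OF b(1) bJ i] by blast }
  qed
  hence "3 * b = g + 2 * t" unfolding s_def by argo
  thus ?thesis using t_le b_lo hi_eq[of "Suc i"] hh_Suc[of i] by argo
qed

lemma gap_excl_inner:
  assumes g: "g \<in> \<alpha>" "hi i < g" "g < lo (Suc i)" and i: "Suc i < k"
  shows False
  using left_bound[OF g Suc_lessD[OF i]] right_bound[OF g i] lo_Suc[of i] hh_pos[of i] by argo

end

definition Qt :: "nat \<Rightarrow> real \<Rightarrow> real" where
  "Qt N p = (1 - p)\<^sup>2 * (1/2)^N - (1 - p) * (1/6)^N + 19/51 * (1/18)^N"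

definition Isq :: "real \<Rightarrow> real \<Rightarrow> real \<Rightarrow> real" where
  "Isq s t p = ((t - p)^3 - (s - p)^3) / 3"

lemma piece_sq:
  "wt (Suc i) * Isq (lo i) (hi i) p =
     (1 - p)\<^sup>2 * (1/2)^(Suc i) - 5 * (1 - p) * (1/6)^(Suc i) + 19/3 * (1/18)^(Suc i)"
proof -
  define u :: real where "u = 1/3^(Suc i)"
  define w :: real where "w = (3/2)^(Suc i)"
  have lo: "lo i = 1 - 3*u" unfolding lo_def u_def by (simp add: field_simps)
  have hi: "hi i = 1 - 2*u" unfolding hi_def u_def by (simp add: field_simps)
  have wu1: "w * u = (1/2)^(Suc i)" unfolding w_def u_def by (simp add: power_divide field_simps)
  have u_eq: "u = (1/3)^(Suc i)" by (simp add: u_def power_one_over)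
  have u2: "u^2 = ((1/3)^2)^(Suc i)" unfolding u_eq by (metis power_mult mult.commute)
  have u3: "u^3 = ((1/3)^3)^(Suc i)" unfolding u_eq by (metis power_mult mult.commute)
  have b2: "(3/2::real) * (1/3)^2 = 1/6" by (simp add: power2_eq_square)
  have b3: "(3/2::real) * (1/3)^3 = 1/18" by (simp add: power3_eq_cube)
  have wu2: "w * u^2 = (1/6)^(Suc i)" unfolding w_def u2 power_mult_distrib[symmetric] b2 by (rule refl)
  have wu3: "w * u^3 = (1/18)^(Suc i)" unfolding w_def u3 power_mult_distrib[symmetric] b3 by (rule refl)
  have "wt (Suc i) * Isq (lo i) (hi i) p = w * ((1-p)\<^sup>2 * u - 5 * (1-p) * u^2 + 19/3 * u^3)"
    unfolding Isq_def lo hi wt_def w_def[symmetric]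
    by (simp add: power2_eq_square power3_eq_cube field_simps)
  also have "\<dots> = (1-p)\<^sup>2 * (w * u) - 5 * (1-p) * (w * u^2) + 19/3 * (w * u^3)"
    by (simp add: algebra_simps)
  finally show ?thesis unfolding wu1 wu2 wu3 .
qed

lemma geom_tail:
  fixes q :: real
  assumes "0 < q" "q < 1"
  shows "(\<lambda>j. q^(Suc (j + N))) sums (q^(Suc N) / (1 - q))"
proof -
  have "(\<lambda>j. q^j) sums (1/(1-q))" using geometric_sums[of q] assms by auto
  hence s: "(\<lambda>j. q^(Suc N) * q^j) sums (q^(Suc N) * (1/(1-q)))" by (rule sums_mult)
  have eq: "(\<lambda>j. q^(Suc N) * q^j) = (\<lambda>j. q^(Suc (j + N)))" by (rule ext) (simp add: power_add mult_ac)
  show ?thesis using s unfolding eq by simp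
qed

lemma sums_Qt: "(\<lambda>j. wt (Suc (j + N)) * Isq (lo (j + N)) (hi (j + N)) p) sums Qt N p"
proof -
  have g2: "(\<lambda>j. (1/2::real)^(Suc (j + N))) sums ((1/2)^N)"
    using geom_tail[of "1/2::real" N] by (simp add: field_simps)
  have g6: "(\<lambda>j. (1/6::real)^(Suc (j + N))) sums ((1/6)^N / 5)"
    using geom_tail[of "1/6::real" N] by (simp add: field_simps)
  have g18: "(\<lambda>j. (1/18::real)^(Suc (j + N))) sums ((1/18)^N / 17)"
    using geom_tail[of "1/18::real" N] by (simp add: field_simps)
  have "(\<lambda>j. (1 - p)\<^sup>2 * (1/2)^(Suc (j + N)) - 5 * (1 - p) * (1/6)^(Suc (j + N)) + 19/3 * (1/18)^(Suc (j + N)))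
      sums ((1 - p)\<^sup>2 * (1/2)^N - 5 * (1 - p) * ((1/6)^N / 5) + 19/3 * ((1/18)^N / 17))"
    by (intro sums_add sums_diff sums_mult g2 g6 g18)
  moreover have "(1 - p)\<^sup>2 * (1/2)^N - 5 * (1 - p) * ((1/6)^N / 5) + 19/3 * ((1/18)^N / 17) = Qt N p"
    unfolding Qt_def by simp
  ultimately show ?thesis unfolding piece_sq by simp
qed

lemma Qt_lower: "25/204 * (1/18::real)^N \<le> Qt N p"
proof -
  define v :: real where "v = (1/3)^N"
  define A :: real where "A = (1/2)^N"
  have v6: "(1/6::real)^N = A * v" unfolding A_def v_def by (simp flip: power_mult_distrib)
  have v18: "(1/18::real)^N = A * v^2" unfolding A_def v_def by (simp flip: power_mult_distrib power_mult add: power2_eq_square)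
  have A0: "0 \<le> A" unfolding A_def by simp
  have "Qt N p - 25/204 * (1/18)^N = A * ((1 - p - v/2)\<^sup>2)"
    unfolding Qt_def v6 v18 A_def[symmetric] by (simp add: power2_eq_square algebra_simps)
  also have "\<dots> \<ge> 0" using A0 by simp
  finally show ?thesis by simp
qed

lemma int_sq_Isq: "s \<le> t \<Longrightarrow> integral {s..t} (\<lambda>x. (x - p)\<^sup>2) = Isq s t p"
  unfolding Isq_def by (rule int_sq)

lemma E_le_sq:
  assumes "finite A" "A \<noteq> {}" "\<And>x. x \<in> J (Suc i) \<Longrightarrow> Fm A x \<le> (x - p)\<^sup>2"
  shows "E A (Suc i) \<le> Isq (lo i) (hi i) p"
proof -
  have "E A (Suc i) \<le> integral {lo i..hi i} (\<lambda>x. (x - p)\<^sup>2)"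
    unfolding E_def J_lohi using assms J_lohi
    by (intro integral_le integrable_continuous_real Fm_cont continuous_intros) auto
  thus ?thesis using int_sq_Isq[of "lo i" "hi i" p] lo_lt_hi[of i] by simp
qed

lemma E_eq_sq:
  assumes "finite A" "A \<noteq> {}" "\<And>x. x \<in> J (Suc i) \<Longrightarrow> Fm A x = (x - p)\<^sup>2"
  shows "E A (Suc i) = Isq (lo i) (hi i) p"
proof -
  have "E A (Suc i) = integral {lo i..hi i} (\<lambda>x. (x - p)\<^sup>2)"
    unfolding E_def J_lohi using assms J_lohi by (intro integral_cong) auto
  thus ?thesis using int_sq_Isq[of "lo i" "hi i" p] lo_lt_hi[of i] by simp
qed

lemma Dr_split:
  assumes "finite A" "A \<noteq> {}"
  shows "Dr A = (\<Sum>i<N. wt (Suc i) * E A (Suc i)) + (\<Sum>j. wt (Suc (j + N)) * E A (Suc (j + N)))"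
  unfolding Dr_def using suminf_split_initial_segment[OF summable_Dr[OF assms], of N] by simp

lemma summable_tail: "finite A \<Longrightarrow> A \<noteq> {} \<Longrightarrow> summable (\<lambda>j. wt (Suc (j + N)) * E A (Suc (j + N)))"
  using summable_ignore_initial_segment[OF summable_Dr, of A N] by simp

lemma tail_le_Qt:
  assumes "finite A" "A \<noteq> {}" "\<And>j x. x \<in> J (Suc (j + N)) \<Longrightarrow> Fm A x \<le> (x - p)\<^sup>2"
  shows "(\<Sum>j. wt (Suc (j + N)) * E A (Suc (j + N))) \<le> Qt N p"
proof (rule sums_le[OF _ summable_sums[OF summable_tail[OF assms(1,2)]] sums_Qt])
  fix j show "wt (Suc (j + N)) * E A (Suc (j + N)) \<le> wt (Suc (j + N)) * Isq (lo (j + N)) (hi (j + N)) p"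
    using E_le_sq[OF assms(1,2) assms(3)] by (intro mult_left_mono) (auto simp: wt_def)
qed

lemma tail_eq_Qt:
  assumes "finite A" "A \<noteq> {}" "\<And>j x. x \<in> J (Suc (j + N)) \<Longrightarrow> Fm A x = (x - p)\<^sup>2"
  shows "(\<Sum>j. wt (Suc (j + N)) * E A (Suc (j + N))) = Qt N p"
proof -
  have "\<And>j. E A (Suc (j + N)) = Isq (lo (j + N)) (hi (j + N)) p"
    by (rule E_eq_sq[OF assms(1,2)]) (rule assms(3))
  hence "(\<lambda>j. wt (Suc (j + N)) * E A (Suc (j + N))) = (\<lambda>j. wt (Suc (j + N)) * Isq (lo (j + N)) (hi (j + N)) p)"
    by simp
  thus ?thesis using sums_unique[OF sums_Qt[of N p]] by simp
qed

lemma alg_gap: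
  fixes u t e A L :: real
  assumes "0 < u" "0 < t" "t < 3/4*u" "0 < e" "0 < A"
  shows "(A/u) * (Isq (L+t) (L+u) (L+2*t+3/2*u) - Isq (L+t) (L+u) (L+2*t+3/2*u+e))
     + ((3/2*u - 2*t)\<^sup>2*A - (3/2*u-2*t)*A*u) - ((3/2*u-2*t-e)\<^sup>2*A - (3/2*u-2*t-e)*A*u) < 0"
proof -
  have id: "(A/u) * (Isq (L+t) (L+u) (L+2*t+3/2*u) - Isq (L+t) (L+u) (L+2*t+3/2*u+e))
     + ((3/2*u - 2*t)\<^sup>2*A - (3/2*u-2*t)*A*u) - ((3/2*u-2*t-e)\<^sup>2*A - (3/2*u-2*t-e)*A*u)
     = A * e * (t*(3*t-5*u) - e*(2*u-t)) / u"
    using assms(1) unfolding Isq_def by (simp add: field_simps power2_eq_square power3_eq_cube)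
  have "t*(3*t-5*u) < 0" using assms by (intro mult_pos_neg) auto
  moreover have "0 < e*(2*u-t)" using assms by (intro mult_pos_pos) auto
  ultimately have "t*(3*t-5*u) - e*(2*u-t) < 0" by linarith
  hence "A * e * (t*(3*t-5*u) - e*(2*u-t)) < 0" using assms by (intro mult_pos_neg) auto
  hence "A * e * (t*(3*t-5*u) - e*(2*u-t)) / u < 0" using assms by (simp add: divide_neg_pos)
  thus ?thesis using id by simp
qed

context S begin

lemma gap_last:
  assumes g0: "g0 \<in> \<alpha>" "hi (k - 1) < g0" "g0 < lo k"
  shows False
proof -
  have kk: "Suc (k - 1) = k" using k1 by simp
  define LL where "LL = {b \<in> \<alpha>. b < lo k}"
  have finL: "finite LL" using fin unfolding LL_def by auto
  have g0L: "g0 \<in> LL" using g0 unfolding LL_def by auto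
  define g where "g = Max LL"
  have gL: "g \<in> LL" unfolding g_def using finL g0L by (intro Max_in) auto
  have g: "g \<in> \<alpha>" "g < lo k" using gL unfolding LL_def by auto
  have gmax: "\<And>b. b \<in> \<alpha> \<Longrightarrow> b < lo k \<Longrightarrow> b \<le> g" unfolding g_def using finL LL_def by (intro Max_ge) auto
  have g_hi: "hi (k - 1) < g" using gmax[OF g0(1) g0(3)] g0 by linarith
  have succ: "\<And>b. b \<in> \<alpha> \<Longrightarrow> g < b \<Longrightarrow> b = c"
  proof -
    fix b assume b: "b \<in> \<alpha>" "g < b"
    hence "lo k \<le> b" using gmax[OF b(1)] by (meson not_le)
    thus "b = c" using c_uniq[OF b(1)] le1_pts[OF b(1)] by blast
  qed
  have gs: "g \<in> \<alpha>" "hi (k - 1) < g" "g < lo (Suc (k - 1))" using g g_hi kk by auto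
  have lb: "g < hi (k - 1) + hh (k - 1) / 2" using left_bound[OF gs] k1 by simp
  have two: "lo k \<in> Rg g" using two_sided[OF gs] kk by simp
  have gc: "g < c" using g c_in by linarith
  have cg: "c \<in> \<alpha> - {g}" using c_in gc by auto
  have B_gt: "lo k < (g + c)/2" using two cg gc unfolding Rg_iff by auto
  define u where "u = hh k"
  define B where "B = (g + c)/2"
  define t where "t = B - lo k"
  define c' where "c' = lo k + 2*t + 3/2*u"
  define e where "e = c - c'"
  have u0: "0 < u" unfolding u_def by (rule hh_pos)
  have hhk1: "hh (k - 1) = 3 * u" unfolding u_def using hh_k by simp
  have lok: "lo k = hi (k - 1) + 3 * u" using lo_k hhk1 by simp
  have one: "1 = lo k + 3 * u" using one_minus_lo'[of k] unfolding u_def by simp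
  have hik: "hi k = lo k + u" unfolding u_def by (rule hi_eq)
  have t0: "0 < t" unfolding t_def B_def using B_gt by simp
  have e0: "0 < e" unfolding e_def c'_def t_def B_def using lb hhk1 lok by argo
  have t34: "t < 3/4 * u" using e0 c_in(3) one unfolding e_def c'_def by argo
  have Bc: "B = lo k + t" "c' = lo k + 2*t + 3/2*u" "c = lo k + 2*t + 3/2*u + e"
    unfolding t_def e_def c'_def by auto
  have Rgc: "\<And>x. x \<in> Rg c \<longleftrightarrow> B < x"
  proof -
    fix x
    have below: "\<And>b. b \<in> \<alpha> - {c} \<Longrightarrow> b \<le> g"
    proof -
      fix b assume b: "b \<in> \<alpha> - {c}"
      show "b \<le> g"
      proof (rule ccontr)
        assume "\<not> b \<le> g" hence "g < b" by simp
        thus False using succ b by auto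
      qed
    qed
    have gcc: "g \<in> \<alpha> - {c}" using g gc by auto
    show "x \<in> Rg c \<longleftrightarrow> B < x"
    proof
      assume "x \<in> Rg c" thus "B < x" using gcc gc unfolding Rg_iff B_def by (auto simp: add.commute)
    next
      assume x: "B < x"
      show "x \<in> Rg c" unfolding Rg_iff
      proof (intro ballI conjI impI)
        fix b assume b: "b \<in> \<alpha> - {c}"
        hence "b \<le> g" by (rule below)
        thus "(c + b)/2 < x" using x unfolding B_def by argo
        assume "c < b" thus "x < (c + b)/2" using \<open>b \<le> g\<close> gc by linarith
      qed
    qed
  qed
  let ?\<beta> = "insert c' (\<alpha> - {c})"
  have fb: "finite ?\<beta>" "?\<beta> \<noteq> {}" using fin by auto
  have le_fin: "\<And>i. i < k \<Longrightarrow> E ?\<beta> (Suc i) \<le> E \<alpha> (Suc i)"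
  proof (rule E_mono[OF fin ne fb])
    fix i x assume i: "i < k" and x: "x \<in> J (Suc i)"
    have "x \<le> hi (k - 1)" using J_le_hi[OF x] i by simp
    hence "x \<notin> Rg c" using Rgc t0 Bc lok u0 by auto
    thus "Fm ?\<beta> x \<le> Fm \<alpha> x" using move_pt(1)[OF c_in(1)] by blast
  qed
  have Bh: "lo k \<le> B" "B \<le> hi k" using Bc t0 t34 hik u0 by auto
  have le_k: "E ?\<beta> (Suc k) \<le> E \<alpha> (Suc k) + integral {B..hi k} (\<lambda>x. (x - c')\<^sup>2 - (x - c)\<^sup>2)"
    unfolding E_def J_lohi
  proof (rule int_piece_bound)
    show "continuous_on {lo k..hi k} (Fm ?\<beta>)" by (rule Fm_cont[OF fb])
    show "continuous_on {lo k..hi k} (Fm \<alpha>)" by (rule Fm_cont[OF fin ne])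
    show "continuous_on {B..hi k} (\<lambda>x. (x - c')\<^sup>2 - (x - c)\<^sup>2)" by (intro continuous_intros)
    show "lo k \<le> B" "B \<le> hi k" "hi k \<le> hi k" using Bh by auto
    fix x assume x: "x \<in> {lo k..hi k}" "x \<noteq> B" "x \<noteq> hi k"
    show "Fm ?\<beta> x \<le> Fm \<alpha> x + (if x \<in> {B..hi k} then (x - c')\<^sup>2 - (x - c)\<^sup>2 else 0)"
    proof (cases "x \<in> {B..hi k}")
      case True
      hence "x \<in> Rg c" using Rgc x by auto
      thus ?thesis using True move_pt(2)[OF c_in(1)] move_pt(3)[OF c_in(1), of c' x] by auto
    next
      case False
      hence "x \<notin> Rg c" using Rgc x by auto
      thus ?thesis using False move_pt(1)[OF c_in(1), of x c'] by auto
    qed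
  qed
  have intq: "integral {B..hi k} (\<lambda>x. (x - c')\<^sup>2 - (x - c)\<^sup>2) = Isq B (hi k) c' - Isq B (hi k) c"
  proof -
    have "integral {B..hi k} (\<lambda>x. (x - c')\<^sup>2 - (x - c)\<^sup>2) =
      integral {B..hi k} (\<lambda>x. (x - c')\<^sup>2) - integral {B..hi k} (\<lambda>x. (x - c)\<^sup>2)"
      by (rule integral_diff) (auto intro!: integrable_continuous_real continuous_intros)
    thus ?thesis using int_sq_Isq[OF Bh(2)] by simp
  qed
  have intail: "\<And>j x. x \<in> J (Suc (j + Suc k)) \<Longrightarrow> x \<in> Rg c"
  proof -
    fix j x assume x: "x \<in> J (Suc (j + Suc k))"
    have "lo (Suc k) \<le> x" using J_ge_lo[OF x] by simp
    moreover have "lo (Suc k) = hi k + u" using lo_Suc[of k] unfolding u_def by simp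
    ultimately show "x \<in> Rg c" using Rgc Bh u0 by auto
  qed
  have tailA: "(\<Sum>j. wt (Suc (j + Suc k)) * E \<alpha> (Suc (j + Suc k))) = Qt (Suc k) c"
    by (rule tail_eq_Qt[OF fin ne]) (use move_pt(2)[OF c_in(1)] intail in blast)
  have tailB: "(\<Sum>j. wt (Suc (j + Suc k)) * E ?\<beta> (Suc (j + Suc k))) \<le> Qt (Suc k) c'"
    by (rule tail_le_Qt[OF fb]) (use move_pt(3)[OF c_in(1)] in blast)
  have sfin: "(\<Sum>i<k. wt (Suc i) * E ?\<beta> (Suc i)) \<le> (\<Sum>i<k. wt (Suc i) * E \<alpha> (Suc i))"
    using le_fin by (intro sum_mono mult_left_mono) (auto simp: wt_def)
  have "Dr ?\<beta> \<le> Dr \<alpha> + (wt (Suc k) * (Isq B (hi k) c' - Isq B (hi k) c) + Qt (Suc k) c' - Qt (Suc k) c)"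
  proof -
    have "Dr ?\<beta> = (\<Sum>i<k. wt (Suc i) * E ?\<beta> (Suc i)) + wt (Suc k) * E ?\<beta> (Suc k)
        + (\<Sum>j. wt (Suc (j + Suc k)) * E ?\<beta> (Suc (j + Suc k)))"
      using Dr_split[OF fb, of "Suc k"] by simp
    moreover have "Dr \<alpha> = (\<Sum>i<k. wt (Suc i) * E \<alpha> (Suc i)) + wt (Suc k) * E \<alpha> (Suc k)
        + (\<Sum>j. wt (Suc (j + Suc k)) * E \<alpha> (Suc (j + Suc k)))"
      using Dr_split[OF fin ne, of "Suc k"] by simp
    moreover have "wt (Suc k) * E ?\<beta> (Suc k) \<le> wt (Suc k) * (E \<alpha> (Suc k) + (Isq B (hi k) c' - Isq B (hi k) c))"
      using le_k intq by (intro mult_left_mono) (auto simp: wt_def)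
    ultimately show ?thesis using sfin tailA tailB by (simp add: algebra_simps)
  qed
  moreover have "wt (Suc k) * (Isq B (hi k) c' - Isq B (hi k) c) + Qt (Suc k) c' - Qt (Suc k) c < 0"
  proof -
    define A :: real where "A = (1/2)^(Suc k)"
    have A0: "0 < A" unfolding A_def by simp
    have wA: "wt (Suc k) = A / u" unfolding wt_def A_def u_def hh_def by (simp add: power_divide)
    have six: "(6::real)^k = 2^k * 3^k" by (simp flip: power_mult_distrib)
    have A6: "(1/6::real)^(Suc k) = A * u" unfolding A_def u_def hh_def
      by (simp add: power_divide six)
    have Q: "\<And>p. Qt (Suc k) p = (1 - p)\<^sup>2 * A - (1 - p) * A * u + 19/51 * (1/18)^(Suc k)"
      unfolding Qt_def A6 A_def by simp
    have 1: "1 - c' = 3/2*u - 2*t" "1 - c = 3/2*u - 2*t - e" using one Bc by auto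
    have "wt (Suc k) * (Isq B (hi k) c' - Isq B (hi k) c) + Qt (Suc k) c' - Qt (Suc k) c =
      (A/u) * (Isq (lo k + t) (lo k + u) (lo k + 2*t + 3/2*u) - Isq (lo k + t) (lo k + u) (lo k + 2*t + 3/2*u + e))
     + ((3/2*u - 2*t)\<^sup>2*A - (3/2*u-2*t)*A*u) - ((3/2*u-2*t-e)\<^sup>2*A - (3/2*u-2*t-e)*A*u)"
      unfolding wA Q 1 Bc(1) hik[symmetric] Bc(2,3)[symmetric] by (simp add: e_def)
    also have "\<dots> < 0" by (rule alg_gap[OF u0 t0 t34 e0 A0])
    finally show ?thesis .
  qed
  ultimately have "Dr ?\<beta> < Dr \<alpha>" by linarith
  moreover have "Dr \<alpha> \<le> Dr ?\<beta>" by (rule opt_Dr[OF opt fb card_move[OF c_in(1)]])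
  ultimately show False by linarith
qed

end

lemma quant_lb1: fixes l r a :: real shows "l \<le> r \<Longrightarrow> (r - l)^3/12 \<le> integral {l..r} (\<lambda>x. (x - a)\<^sup>2)"
proof -
  assume lr: "l \<le> r"
  have "integral {l..r} (\<lambda>x. (x - a)\<^sup>2) - (r - l)^3/12 = (r - l) * (a - (l + r)/2)\<^sup>2"
    using int_sq[OF lr, of a] by (simp add: power2_eq_square power3_eq_cube field_simps)
  moreover have "0 \<le> (r - l) * (a - (l + r)/2)\<^sup>2" using lr by simp
  ultimately show ?thesis by linarith
qed

lemma cubic_ineq:
  fixes m s L :: real
  assumes m: "1 \<le> m" and s: "0 \<le> s" "s \<le> L"
  shows "L^3/(m+1)^2 \<le> s^3/m^2 + (L - s)^3"
proof -
  have poly: "s^3*(m+1)^2 + (L-s)^3*m^2*(m+1)^2 - L^3*m^2 = (s*(m+1) - L*m)^2 * (s*(1 - m^2) + L*m*(m+2))"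
    by (simp add: power2_eq_square power3_eq_cube algebra_simps)
  have "L * (1 - m^2) \<le> s * (1 - m^2)"
  proof (rule mult_right_mono_neg)
    show "s \<le> L" by (rule s(2))
    have "1 \<le> m^2" using m by (simp add: one_le_power)
    thus "1 - m^2 \<le> 0" by simp
  qed
  moreover have "0 \<le> L * (1 - m^2) + L*m*(m+2)"
  proof -
    have "L * (1 - m^2) + L*m*(m+2) = L * (1 + 2*m)" by (simp add: algebra_simps power2_eq_square)
    thus ?thesis using s m by simp
  qed
  ultimately have "0 \<le> s*(1 - m^2) + L*m*(m+2)" by linarith
  hence "0 \<le> (s*(m+1) - L*m)^2 * (s*(1 - m^2) + L*m*(m+2))" by simp
  hence key: "L^3*m^2 \<le> s^3*(m+1)^2 + (L-s)^3*m^2*(m+1)^2" using poly by linarith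
  have pos: "0 < m^2 * (m+1)^2" using m by simp
  have "L^3/(m+1)^2 = (L^3*m^2) / (m^2*(m+1)^2)" using m by (simp add: field_simps)
  also have "\<dots> \<le> (s^3*(m+1)^2 + (L-s)^3*m^2*(m+1)^2) / (m^2*(m+1)^2)"
    using key pos by (intro divide_right_mono) auto
  also have "\<dots> = s^3/m^2 + (L - s)^3" using m by (simp add: field_simps)
  finally show ?thesis .
qed

lemma quant_lb:
  fixes m :: nat
  shows "\<forall>A l r. finite A \<longrightarrow> A \<noteq> {} \<longrightarrow> card A \<le> m \<longrightarrow> l \<le> r \<longrightarrow>
    (r - l)^3/(12 * (real m)\<^sup>2) \<le> integral {l..r} (Fm A)"
proof (induction m)
  case 0 thus ?case by auto
next
  case (Suc m)
  show ?case
  proof (intro allI impI)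
    fix A :: "real set" and l r :: real
    assume A: "finite A" "A \<noteq> {}" "card A \<le> Suc m" and lr: "l \<le> r"
    have L0: "0 \<le> (r - l)^3" using lr by simp
    show "(r - l)^3/(12 * (real (Suc m))\<^sup>2) \<le> integral {l..r} (Fm A)"
    proof (cases "card A \<le> m")
      case True
      have "0 < card A" using A by (simp add: card_gt_0_iff)
      hence m1: "1 \<le> m" using True by linarith
      have "(r - l)^3/(12 * (real (Suc m))\<^sup>2) \<le> (r - l)^3/(12 * (real m)\<^sup>2)"
        using m1 L0 by (intro divide_left_mono mult_left_mono power_mono) auto
      also have "\<dots> \<le> integral {l..r} (Fm A)" using Suc.IH A True lr by blast
      finally show ?thesis .
    next
      case False
      hence cA: "card A = Suc m" using A by simp
      define as where "as = Max A"
      have as: "as \<in> A" unfolding as_def using A by (intro Max_in) auto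
      have asmax: "\<And>b. b \<in> A \<Longrightarrow> b \<le> as" unfolding as_def using A by auto
      define A' where "A' = A - {as}"
      have cA': "card A' = m" unfolding A'_def using cA as A by simp
      have finA': "finite A'" unfolding A'_def using A by simp
      show ?thesis
      proof (cases "m = 0")
        case True
        hence "A = {as}" using cA as A by (metis card_1_singletonE One_nat_def singletonD)
        hence "Fm A = (\<lambda>x. (x - as)\<^sup>2)" by (simp add: Fm_single fun_eq_iff)
        thus ?thesis using quant_lb1[OF lr, of as] True by simp
      next
        case False
        hence m1: "1 \<le> m" by simp
        have neA': "A' \<noteq> {}" using cA' False finA' by auto
        define a' where "a' = Max A'"
        have a': "a' \<in> A'" unfolding a'_def using finA' neA' by (intro Max_in) auto
        have a'max: "\<And>b. b \<in> A' \<Longrightarrow> b \<le> a'" unfolding a'_def using finA' by auto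
        have a'as: "a' < as" using a' asmax[of a'] unfolding A'_def by force
        define t0 where "t0 = (a' + as)/2"
        have right: "\<And>x. t0 \<le> x \<Longrightarrow> (x - as)\<^sup>2 \<le> Fm A x"
        proof -
          fix x assume x: "t0 \<le> x"
          show "(x - as)\<^sup>2 \<le> Fm A x"
          proof (rule Fm_ge[OF A(1,2)])
            fix b assume b: "b \<in> A"
            show "(x - as)\<^sup>2 \<le> (x - b)\<^sup>2"
            proof (cases "b = as")
              case True thus ?thesis by simp
            next
              case False
              hence "b \<le> a'" using a'max b unfolding A'_def by auto
              hence "\<bar>x - as\<bar> \<le> \<bar>x - b\<bar>" using x asmax[OF b] a'as unfolding t0_def by (simp add: abs_le_iff)
              thus ?thesis by (simp add: abs_le_square_iff)
            qed
          qed
        qed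
        have left: "\<And>x. x \<le> t0 \<Longrightarrow> Fm A' x \<le> Fm A x"
        proof -
          fix x assume x: "x \<le> t0"
          obtain b0 where b0: "b0 \<in> A" "Fm A x = (x - b0)\<^sup>2" using Fm_ex[OF A(1,2)] by blast
          show "Fm A' x \<le> Fm A x"
          proof (cases "b0 = as")
            case False
            hence "b0 \<in> A'" using b0 unfolding A'_def by auto
            thus ?thesis using Fm_le[OF finA'] b0 by simp
          next
            case True
            have "\<bar>x - a'\<bar> \<le> \<bar>x - as\<bar>" using x a'as unfolding t0_def by (simp add: abs_le_iff)
            hence "(x - a')\<^sup>2 \<le> (x - as)\<^sup>2" by (simp add: abs_le_square_iff)
            thus ?thesis using Fm_le[OF finA' a', of x] b0 True by simp
          qed
        qed
        have intA: "\<And>u v. Fm A integrable_on {u..v}" by (intro integrable_continuous_real Fm_cont A(1,2))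
        have intA': "\<And>u v. Fm A' integrable_on {u..v}" by (intro integrable_continuous_real Fm_cont finA' neA')
        have intsq: "\<And>u v. (\<lambda>x. (x - as)\<^sup>2) integrable_on {u..v}" by (intro integrable_continuous_real continuous_intros)
        have mono_m: "(r - l)^3/(12 * (real (Suc m))\<^sup>2) \<le> (r - l)^3/(12 * (real m)\<^sup>2)"
          using m1 L0 by (intro divide_left_mono mult_left_mono power_mono) auto
        have one: "1 \<le> (real (Suc m))\<^sup>2" by (rule one_le_power) simp
        have mono_1: "(r - l)^3/(12 * (real (Suc m))\<^sup>2) \<le> (r - l)^3/12"
          using L0 one by (intro divide_left_mono) auto
        consider "t0 \<le> l" | "r \<le> t0" | "l < t0 \<and> t0 < r" by linarith
        thus ?thesis
        proof cases
          case 1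
          have "integral {l..r} (\<lambda>x. (x - as)\<^sup>2) \<le> integral {l..r} (Fm A)"
            using 1 right by (intro integral_le intsq intA) auto
          thus ?thesis using quant_lb1[OF lr, of as] mono_1 by linarith
        next
          case 2
          have "integral {l..r} (Fm A') \<le> integral {l..r} (Fm A)"
            using 2 left by (intro integral_le intA' intA) auto
          moreover have "(r - l)^3/(12 * (real m)\<^sup>2) \<le> integral {l..r} (Fm A')"
            using Suc.IH finA' neA' cA' lr by blast
          ultimately show ?thesis using mono_m by linarith
        next
          case 3
          have "integral {l..r} (Fm A) = integral {l..t0} (Fm A) + integral {t0..r} (Fm A)"
            using 3 by (intro Henstock_Kurzweil_Integration.integral_combine[symmetric] intA) auto
          moreover have "integral {l..t0} (Fm A') \<le> integral {l..t0} (Fm A)"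
            using left by (intro integral_le intA' intA) auto
          moreover have "(t0 - l)^3/(12 * (real m)\<^sup>2) \<le> integral {l..t0} (Fm A')"
            using Suc.IH finA' neA' cA' 3 by auto
          moreover have "integral {t0..r} (\<lambda>x. (x - as)\<^sup>2) \<le> integral {t0..r} (Fm A)"
            using right by (intro integral_le intsq intA) auto
          moreover have "(r - t0)^3/12 \<le> integral {t0..r} (\<lambda>x. (x - as)\<^sup>2)"
            using 3 by (intro quant_lb1) auto
          moreover have "(r - l)^3/(12 * (real (Suc m))\<^sup>2) \<le> (t0 - l)^3/(12 * (real m)\<^sup>2) + (r - t0)^3/12"
          proof -
            have "(r - l)^3/(real m + 1)\<^sup>2 \<le> (t0 - l)^3/(real m)\<^sup>2 + ((r - l) - (t0 - l))^3"
              using m1 3 by (intro cubic_ineq) auto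
            thus ?thesis by (simp add: field_simps)
          qed
          ultimately show ?thesis by linarith
        qed
      qed
    qed
  qed
qed

definition eqpts :: "real \<Rightarrow> real \<Rightarrow> nat \<Rightarrow> real set" where
  "eqpts l r m = (\<lambda>j. l + (2 * real j + 1) * (r - l) / (2 * real m)) ` {..<m}"

lemma eqpts_fin: "finite (eqpts l r m)" "card (eqpts l r m) \<le> m"
  unfolding eqpts_def by (auto intro: card_image_le[THEN order_trans])

lemma eqpts_ne: "1 \<le> m \<Longrightarrow> eqpts l r m \<noteq> {}" unfolding eqpts_def by (simp add: lessThan_empty_iff)

lemma eq_ub:
  assumes m: "1 \<le> m" and lr: "l \<le> r"
  shows "integral {l..r} (Fm (eqpts l r m)) \<le> (r - l)^3/(12 * (real m)\<^sup>2)"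
proof -
  define d where "d = (r - l) / real m"
  have d0: "0 \<le> d" unfolding d_def using lr by simp
  let ?Q = "eqpts l r m"
  have fQ: "finite ?Q" "?Q \<noteq> {}" using eqpts_fin eqpts_ne[OF m] by auto
  have intQ: "\<And>u v. Fm ?Q integrable_on {u..v}" by (intro integrable_continuous_real Fm_cont fQ)
  have step: "\<forall>j. j \<le> m \<longrightarrow> integral {l..l + real j * d} (Fm ?Q) \<le> real j * d^3/12"
  proof (intro allI)
    fix j show "j \<le> m \<longrightarrow> integral {l..l + real j * d} (Fm ?Q) \<le> real j * d^3/12"
    proof (induction j)
      case 0 thus ?case by simp
    next
      case (Suc j)
      show ?case
      proof
        assume jm: "Suc j \<le> m"
        define cj where "cj = l + (2 * real j + 1) * (r - l) / (2 * real m)"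
        have cjQ: "cj \<in> ?Q" unfolding eqpts_def cj_def using jm by auto
        have cj': "cj = (l + real j * d) + d/2" unfolding cj_def d_def using m by (simp add: field_simps)
        have "integral {l..l + real (Suc j) * d} (Fm ?Q) =
            integral {l..l + real j * d} (Fm ?Q) + integral {l + real j * d..l + real (Suc j) * d} (Fm ?Q)"
        proof -
          have "l \<le> l + real j * d" using d0 by simp
          moreover have "l + real j * d \<le> l + real (Suc j) * d" using d0 by (simp add: mult_right_mono)
          ultimately show ?thesis using Henstock_Kurzweil_Integration.integral_combine[OF _ _ intQ] by metis
        qed
        moreover have "integral {l + real j * d..l + real (Suc j) * d} (Fm ?Q) \<le>
            integral {l + real j * d..l + real (Suc j) * d} (\<lambda>x. (x - cj)\<^sup>2)"
          using Fm_le[OF fQ(1) cjQ] by (intro integral_le intQ integrable_continuous_real continuous_intros) auto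
        moreover have "integral {l + real j * d..l + real (Suc j) * d} (\<lambda>x. (x - cj)\<^sup>2) = d^3/12"
          using int_sq[of "l + real j * d" "l + real (Suc j) * d" cj] d0 unfolding cj'
          by (simp add: algebra_simps power3_eq_cube field_simps)
        ultimately show "integral {l..l + real (Suc j) * d} (Fm ?Q) \<le> real (Suc j) * d^3/12"
          using Suc.IH jm by (simp add: algebra_simps)
      qed
    qed
  qed
  have "l + real m * d = r" unfolding d_def using m by simp
  hence "integral {l..r} (Fm ?Q) \<le> real m * d^3/12" using step by force
  also have "\<dots> = (r - l)^3/(12 * (real m)\<^sup>2)" unfolding d_def using m by (simp add: power3_eq_cube power2_eq_square field_simps)
  finally show ?thesis .
qed

lemma Fm_subset: "finite B \<Longrightarrow> A \<subseteq> B \<Longrightarrow> A \<noteq> {} \<Longrightarrow> Fm B x \<le> Fm A x"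
proof -
  assume B: "finite B" and AB: "A \<subseteq> B" and A: "A \<noteq> {}"
  have fA: "finite A" using B AB finite_subset by auto
  obtain a where "a \<in> A" "Fm A x = (x - a)\<^sup>2" using Fm_ex[OF fA A] by blast
  thus ?thesis using Fm_le[OF B, of a x] AB by auto
qed

lemma wt_hh3: "wt (Suc i) * hh i ^ 3 = (1/18)^(Suc i)"
proof -
  have h: "hh i = (1/3)^(Suc i)" by (simp add: hh_def power_one_over)
  have h3: "hh i ^ 3 = ((1/3)^3)^(Suc i)" unfolding h by (metis power_mult mult.commute)
  have b3: "(3/2::real) * (1/3)^3 = 1/18" by (simp add: power3_eq_cube)
  show ?thesis unfolding wt_def h3 power_mult_distrib[symmetric] b3 by (rule refl)
qed

lemma Qt_opt: "Qt N (1 - (1/3)^N/2) = 25/204 * (1/18)^N"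
proof -
  define v :: real where "v = (1/3)^N"
  define A :: real where "A = (1/2)^N"
  have v6: "(1/6::real)^N = A * v" unfolding A_def v_def by (simp flip: power_mult_distrib)
  have v18: "(1/18::real)^N = A * v^2" unfolding A_def v_def by (simp flip: power_mult_distrib power_mult add: power2_eq_square)
  show ?thesis unfolding Qt_def v6 v18 A_def[symmetric] v_def[symmetric] by (simp add: power2_eq_square field_simps)
qed

lemma Isq_mid: "Isq l r ((l + r)/2) = (r - l)^3/12"
  unfolding Isq_def by (simp add: power3_eq_cube field_simps)

context S begin

definition nb where "nb i = card (\<alpha> \<inter> J (Suc i))"

lemma blk_fin: "finite (\<alpha> \<inter> J (Suc i))" using fin by simp
lemma blk_ne: "i < k \<Longrightarrow> \<alpha> \<inter> J (Suc i) \<noteq> {}" using ptJ by blast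
lemma nb_pos: "i < k \<Longrightarrow> 1 \<le> nb i"
proof -
  assume "i < k"
  hence "0 < card (\<alpha> \<inter> J (Suc i))" using blk_fin[of i] blk_ne[of i] by (simp add: card_gt_0_iff)
  thus ?thesis unfolding nb_def by simp
qed

lemma struct: "a \<in> \<alpha> \<Longrightarrow> (\<exists>i<k. a \<in> J (Suc i)) \<or> a = c"
proof -
  assume a: "a \<in> \<alpha>"
  show ?thesis
  proof (cases "lo k \<le> a")
    case True thus ?thesis using c_uniq[OF a] le1_pts[OF a] by blast
  next
    case False
    define I where "I = {i. i \<le> k \<and> lo i \<le> a}"
    have "0 \<in> I" unfolding I_def using nonneg_pts[OF a] by (simp add: lo_def)
    have finI: "finite I" unfolding I_def by simp
    define i where "i = Max I"
    have iI: "i \<in> I" unfolding i_def using finI \<open>0 \<in> I\<close> by (intro Max_in) auto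
    have ik: "i < k" using iI False unfolding I_def by (metis (mono_tags, lifting) le_neq_implies_less mem_Collect_eq)
    have loi: "lo i \<le> a" using iI unfolding I_def by simp
    have "Suc i \<notin> I" unfolding i_def using finI by (metis Max_ge Suc_n_not_le_n)
    hence losi: "a < lo (Suc i)" using ik unfolding I_def by auto
    show ?thesis
    proof (cases "a \<le> hi i")
      case True thus ?thesis using ik loi J_lohi by auto
    next
      case False
      show ?thesis
      proof (cases "Suc i < k")
        case True thus ?thesis using gap_excl_inner[OF a _ losi True] False by auto
      next
        case nf: False
        hence "i = k - 1" using ik by simp
        thus ?thesis using gap_last[OF a] False losi ik by auto
      qed
    qed
  qed
qed

lemma far_block:
  assumes i: "i < k" and x: "x \<in> J (Suc i)" and b: "b \<in> \<alpha>" "b \<notin> J (Suc i)"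
  shows "hh i \<le> \<bar>x - b\<bar>"
proof -
  have xi: "lo i \<le> x" "x \<le> hi i" using x J_lohi by auto
  consider i' where "i' < k" "b \<in> J (Suc i')" | "b = c" using struct[OF b(1)] by blast
  thus ?thesis
  proof cases
    case 1
    have ne: "i' \<noteq> i" using 1 b by auto
    have bi: "lo i' \<le> b" "b \<le> hi i'" using 1 J_lohi by auto
    show ?thesis
    proof (cases "i' < i")
      case True
      have "hi i' + hh i' \<le> lo i" by (rule lo_Suc_le[OF True])
      moreover have "hh i \<le> hh i'" using True hh_anti by simp
      ultimately show ?thesis using xi bi by auto
    next
      case False hence "i < i'" using ne by simp
      hence "hi i + hh i \<le> lo i'" by (rule lo_Suc_le)
      thus ?thesis using xi bi by auto
    qed
  next
    case 2
    have "hi i + hh i \<le> lo k" by (rule lo_Suc_le[OF i])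
    thus ?thesis using xi 2 c_in by auto
  qed
qed

lemma Fm_block: "i < k \<Longrightarrow> x \<in> J (Suc i) \<Longrightarrow> Fm (\<alpha> \<inter> J (Suc i)) x \<le> Fm \<alpha> x"
proof -
  assume i: "i < k" and x: "x \<in> J (Suc i)"
  obtain b where b: "b \<in> \<alpha>" "Fm \<alpha> x = (x - b)\<^sup>2" using Fm_ex[OF fin ne] by blast
  show ?thesis
  proof (cases "b \<in> J (Suc i)")
    case True thus ?thesis using Fm_le[OF blk_fin[of i], of b x] b by auto
  next
    case False
    obtain y where y: "y \<in> \<alpha>" "y \<in> J (Suc i)" using ptJ[OF i] by blast
    have "\<bar>x - y\<bar> \<le> hh i" using x y J_lohi hi_eq[of i] by auto
    hence "(x - y)\<^sup>2 \<le> (x - b)\<^sup>2" using far_block[OF i x b(1) False] by (intro sq_le_dist) auto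
    thus ?thesis using Fm_le[OF blk_fin[of i], of y x] y b by auto
  qed
qed

lemma E_block_lb: "i < k \<Longrightarrow> hh i ^ 3 / (12 * (real (nb i))\<^sup>2) \<le> E \<alpha> (Suc i)"
proof -
  assume i: "i < k"
  have "hh i ^ 3 / (12 * (real (nb i))\<^sup>2) \<le> integral {lo i..hi i} (Fm (\<alpha> \<inter> J (Suc i)))"
    using quant_lb[of "nb i"] blk_fin blk_ne[OF i] lo_lt_hi[of i] hi_eq[of i] unfolding nb_def
    by (metis add_diff_cancel_left' less_imp_le order_refl)
  also have "\<dots> \<le> E \<alpha> (Suc i)" unfolding E_def J_lohi[symmetric]
    using Fm_block[OF i] blk_fin blk_ne[OF i] by (intro integral_le integrable_Fm fin ne) auto
  finally show ?thesis .
qed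

lemma Fm_tail: "k \<le> i \<Longrightarrow> x \<in> J (Suc i) \<Longrightarrow> Fm \<alpha> x = (x - c)\<^sup>2"
proof -
  assume i: "k \<le> i" and x: "x \<in> J (Suc i)"
  have x1: "lo k \<le> x" "x \<le> 1" using J_ge_lo[OF x i] x J_lohi hi_lt1[of i] by auto
  have xc: "\<bar>x - c\<bar> \<le> 3 * hh k" using x1 c_in one_minus_lo'[of k] by auto
  have "(x - c)\<^sup>2 \<le> Fm \<alpha> x"
  proof (rule Fm_ge[OF fin ne])
    fix b assume b: "b \<in> \<alpha>"
    show "(x - c)\<^sup>2 \<le> (x - b)\<^sup>2"
    proof (cases "b = c")
      case False
      then obtain i' where i': "i' < k" "b \<in> J (Suc i')" using struct[OF b] by blast
      have "b \<le> hi (k - 1)" using J_le_hi[OF i'(2)] i' by simp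
      hence "3 * hh k \<le> \<bar>x - b\<bar>" using x1 lo_k hh_k by auto
      thus ?thesis using sq_le_dist[OF xc] by blast
    qed simp
  qed
  thus ?thesis using Fm_le[OF fin c_in(1), of x] by linarith
qed

lemma tail_alpha: "(\<Sum>j. wt (Suc (j + k)) * E \<alpha> (Suc (j + k))) = Qt k c"
  by (rule tail_eq_Qt[OF fin ne]) (rule Fm_tail, auto)

lemma keep_block:
  assumes fb: "finite \<beta>" and sub: "\<alpha> \<inter> J (Suc i) \<subseteq> \<beta>" and i: "i < k"
  shows "E \<beta> (Suc i) \<le> E \<alpha> (Suc i)"
proof -
  have "\<beta> \<noteq> {}" using sub blk_ne[OF i] by auto
  thus ?thesis using Fm_subset[OF fb sub blk_ne[OF i]] Fm_block[OF i]
    by (intro E_mono fin ne fb) (auto intro: order_trans)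
qed

lemma keep_tail:
  assumes fb: "finite \<beta>" and cb: "c \<in> \<beta>" and i: "k \<le> i"
  shows "E \<beta> (Suc i) \<le> E \<alpha> (Suc i)"
  using Fm_le[OF fb cb] Fm_tail[OF i] cb by (intro E_mono fin ne fb) auto

lemma eq_block:
  assumes fb: "finite \<beta>" and sub: "eqpts (lo i) (hi i) m \<subseteq> \<beta>" and m: "1 \<le> m"
  shows "E \<beta> (Suc i) \<le> hh i ^ 3 / (12 * (real m)\<^sup>2)"
proof -
  have "\<beta> \<noteq> {}" using sub eqpts_ne[OF m] by auto
  hence "E \<beta> (Suc i) \<le> integral {lo i..hi i} (Fm (eqpts (lo i) (hi i) m))"
    unfolding E_def J_lohi using Fm_subset[OF fb sub eqpts_ne[OF m]]
    by (intro integral_le integrable_continuous_real Fm_cont fb eqpts_fin(1) eqpts_ne[OF m]) auto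
  also have "\<dots> \<le> hh i ^ 3 / (12 * (real m)\<^sup>2)" using eq_ub[OF m, of "lo i" "hi i"] lo_lt_hi[of i] hi_eq[of i] by simp
  finally show ?thesis .
qed

lemma tail_Suc:
  assumes "finite A" "A \<noteq> {}"
  shows "(\<Sum>j. wt (Suc (j + N)) * E A (Suc (j + N))) = wt (Suc N) * E A (Suc N) + (\<Sum>j. wt (Suc (j + Suc N)) * E A (Suc (j + Suc N)))"
  using suminf_split_head[OF summable_tail[OF assms, of N]] by (simp add: algebra_simps)

end

lemma frac_bound:
  fixes m :: nat assumes "2 \<le> m"
  shows "1/(real (m - 1))\<^sup>2 - 1/(real m)\<^sup>2 \<le> 3/4"
proof (cases "m = 2")
  case True thus ?thesis by (simp add: power2_eq_square)
next
  case False
  hence "(2::nat) \<le> m - 1" using assms by linarith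
  hence m3: "2 \<le> real (m - 1)" by (metis of_nat_le_iff of_nat_numeral)
  have "(2::real)^2 \<le> (real (m - 1))^2" using m3 by (intro power_mono) auto
  hence "1/(real (m - 1))\<^sup>2 \<le> 1/2^2" by (intro frac_le) auto
  hence "1/(real (m - 1))\<^sup>2 \<le> 1/4" by simp
  moreover have "0 \<le> 1/(real m)\<^sup>2" by simp
  ultimately show ?thesis by linarith
qed

definition gg :: "real \<Rightarrow> real" where "gg x = 1/x\<^sup>2 - 1/(x+1)\<^sup>2"

lemma gg_eq: "0 < x \<Longrightarrow> gg x = (2*x+1)/(x\<^sup>2*(x+1)\<^sup>2)"
proof -
  assume x: "0 < x"
  have nz: "x \<noteq> 0" "x + 1 \<noteq> 0" using x by auto
  show ?thesis unfolding gg_def using nz by (simp add: field_simps) (simp add: power2_eq_square algebra_simps)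
qed

lemma frac_cross: fixes a b c d :: real shows "0 < b \<Longrightarrow> 0 < d \<Longrightarrow> a * d \<le> c * b \<Longrightarrow> a / b \<le> c / d"
  by (simp add: field_simps)

lemma frac_cross_less: fixes a b c d :: real shows "0 < b \<Longrightarrow> 0 < d \<Longrightarrow> a * d < c * b \<Longrightarrow> a / b < c / d"
  by (simp add: field_simps)

lemma gg_step: "0 < x \<Longrightarrow> gg (x + 1) \<le> gg x"
proof -
  assume x: "0 < x"
  have e1: "gg (x + 1) = (2*x+3)/((x+1)\<^sup>2*(x+2)\<^sup>2)" using gg_eq[of "x+1"] x by (simp add: algebra_simps)
  have e2: "gg x = (2*x+1)/(x\<^sup>2*(x+1)\<^sup>2)" using gg_eq[OF x] .
  have poly: "(2*x+3)*x\<^sup>2 \<le> (2*x+1)*(x+2)\<^sup>2"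
  proof -
    have "(2*x+1)*(x+2)\<^sup>2 - (2*x+3)*x\<^sup>2 = 6*x\<^sup>2 + 12*x + 4" by (simp add: power2_eq_square algebra_simps)
    moreover have "0 \<le> 6*x\<^sup>2 + 12*x + 4" using x by simp
    ultimately show ?thesis by linarith
  qed
  have "(2*x+3) * (x\<^sup>2*(x+1)\<^sup>2) \<le> (2*x+1) * ((x+1)\<^sup>2*(x+2)\<^sup>2)"
  proof -
    have "(2*x+3)*x\<^sup>2*(x+1)\<^sup>2 \<le> (2*x+1)*(x+2)\<^sup>2*(x+1)\<^sup>2"
      using poly by (intro mult_right_mono) auto
    thus ?thesis by (simp add: algebra_simps)
  qed
  thus ?thesis unfolding e1 e2 using x by (intro frac_cross) auto
qed

lemma gg_anti: assumes p1: "1 \<le> p" and pq: "p \<le> q" shows "gg (real q) \<le> gg (real p)"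
  using pq
proof (induction q rule: dec_induct)
  case base thus ?case by simp
next
  case (step q)
  have "gg (real q + 1) \<le> gg (real q)" by (rule gg_step) (use step p1 in simp)
  moreover have "gg (real (Suc q)) = gg (real q + 1)" by (simp add: add.commute)
  ultimately show ?case using step by linarith
qed

lemma gg_18: "1 \<le> y \<Longrightarrow> gg y < 18 * gg (y + 1)"
proof -
  assume y: "1 \<le> y"
  have e1: "gg (y + 1) = (2*y+3)/((y+1)\<^sup>2*(y+2)\<^sup>2)" using gg_eq[of "y+1"] y by (simp add: algebra_simps)
  have e2: "gg y = (2*y+1)/(y\<^sup>2*(y+1)\<^sup>2)" using gg_eq y by simp
  have poly: "(2*y+1)*(y+2)\<^sup>2 < 18*(2*y+3)*y\<^sup>2"
  proof -
    have "18*(2*y+3)*y\<^sup>2 - (2*y+1)*(y+2)\<^sup>2 = 34*y^3 + 45*y\<^sup>2 - 12*y - 4"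
      by (simp add: power2_eq_square power3_eq_cube algebra_simps)
    moreover have "y \<le> y\<^sup>2" using y by (simp add: power2_eq_square)
    moreover have "1 \<le> y\<^sup>2" using y by (simp add: one_le_power)
    moreover have "0 \<le> y^3" using y by simp
    ultimately show ?thesis by linarith
  qed
  have "(2*y+1) * ((y+1)\<^sup>2*(y+2)\<^sup>2) < (18*(2*y+3)) * (y\<^sup>2*(y+1)\<^sup>2)"
  proof -
    have "(2*y+1)*(y+2)\<^sup>2*(y+1)\<^sup>2 < 18*(2*y+3)*y\<^sup>2*(y+1)\<^sup>2"
      using poly y by (intro mult_strict_right_mono) auto
    thus ?thesis by (simp add: algebra_simps)
  qed
  hence "(2*y+1)/(y\<^sup>2*(y+1)\<^sup>2) < (18*(2*y+3))/((y+1)\<^sup>2*(y+2)\<^sup>2)"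
    using y by (intro frac_cross_less) auto
  thus ?thesis unfolding e1 e2 by simp
qed

lemma ineq_b1:
  fixes p q :: nat assumes "1 \<le> p" "p \<le> q" "2 \<le> q"
  shows "gg (real (q - 1)) < 18 * gg (real p)"
proof -
  have "gg (real (q - 1)) < 18 * gg (real (q - 1) + 1)" using assms by (intro gg_18) auto
  also have "real (q - 1) + 1 = real q" using assms by simp
  finally show ?thesis using gg_anti[OF assms(1,2)] by linarith
qed

lemma sum_one_change:
  fixes f g :: "nat \<Rightarrow> real"
  assumes "finite I" "i \<in> I" "\<And>j. j \<in> I \<Longrightarrow> j \<noteq> i \<Longrightarrow> f j \<le> g j" "f i \<le> g i - d"
  shows "sum f I \<le> sum g I - d"
proof -
  have "sum f I = f i + sum f (I - {i})" using assms by (simp add: sum.remove)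
  moreover have "sum g I = g i + sum g (I - {i})" using assms by (simp add: sum.remove)
  moreover have "sum f (I - {i}) \<le> sum g (I - {i})" using assms by (intro sum_mono) auto
  ultimately show ?thesis using assms by linarith
qed

context S begin

lemma better2:
  assumes fb: "finite \<beta>" "\<beta> \<noteq> {}" "card \<beta> \<le> n" and SS: "finite SS"
    and le: "\<And>i. i \<notin> SS \<Longrightarrow> E \<beta> (Suc i) \<le> E \<alpha> (Suc i)"
    and pos: "0 < (\<Sum>i\<in>SS. wt (Suc i) * (E \<alpha> (Suc i) - E \<beta> (Suc i)))"
  shows False
proof -
  let ?g = "\<lambda>m. wt (Suc m) * E \<alpha> (Suc m) - wt (Suc m) * E \<beta> (Suc m)"
  have sg: "summable ?g" by (intro summable_diff summable_Dr fin ne fb)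
  have "Dr \<alpha> - Dr \<beta> = suminf ?g" unfolding Dr_def by (intro suminf_diff summable_Dr fin ne fb)
  moreover have "sum ?g SS \<le> suminf ?g"
    by (rule sum_le_suminf[OF sg SS]) (use le in \<open>auto simp: wt_def algebra_simps\<close>)
  moreover have "sum ?g SS = (\<Sum>i\<in>SS. wt (Suc i) * (E \<alpha> (Suc i) - E \<beta> (Suc i)))"
    by (simp add: algebra_simps)
  ultimately have "Dr \<beta> < Dr \<alpha>" using pos by linarith
  thus False using opt_Dr[OF opt fb] by linarith
qed

lemma c_notin_blk: "i < k \<Longrightarrow> c \<notin> J (Suc i)"
  using J_le_hi[of c i "k - 1"] c_in lo_k hh_pos[of "k - 1"] by fastforce

lemma blk_disj: "i \<noteq> i' \<Longrightarrow> (\<alpha> \<inter> J (Suc i)) \<inter> (\<alpha> \<inter> J (Suc i')) = {}"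
  using J_disj' by (metis Int_emptyI Int_iff Suc_inject le_add1 plus_1_eq_Suc)

lemma card_blk: "card (\<alpha> \<inter> J (Suc i)) = nb i" by (simp add: nb_def)

end

context S begin

lemma blk_sub_keep:
  assumes "x \<in> \<alpha> \<inter> J (Suc j)" "j < k" "\<And>i'. i' \<in> R \<Longrightarrow> i' \<noteq> j"
  shows "x \<notin> (\<Union>i'\<in>R. \<alpha> \<inter> J (Suc i')) \<union> {c}"
  using assms blk_disj c_notin_blk by blast

lemma pow18: "k' \<le> k \<Longrightarrow> (1/18::real)^k' = 18^(k - k') * (1/18)^k"
proof -
  assume "k' \<le> k"
  hence "(1/18::real)^k = (1/18)^k' * (1/18)^(k - k')" by (simp flip: power_add)
  thus ?thesis by (simp add: power_one_over field_simps)
qed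

lemma last_one: "nb (k - 1) = 1"
proof (rule ccontr)
  assume ne1: "nb (k - 1) \<noteq> 1"
  define i0 where "i0 = k - 1"
  have i0k: "i0 < k" "Suc i0 = k" using k1 unfolding i0_def by auto
  define n0 where "n0 = nb i0"
  have n02: "2 \<le> n0" using nb_pos[OF i0k(1)] ne1 unfolding n0_def i0_def by linarith
  define B0 where "B0 = \<alpha> \<inter> J (Suc i0)"
  define mid where "mid = (lo k + hi k)/2"
  define p where "p = 1 - (1/3::real)^(Suc k)/2"
  define X where "X = B0 \<union> {c}"
  define \<beta> where "\<beta> = (\<alpha> - X) \<union> eqpts (lo i0) (hi i0) (n0 - 1) \<union> {mid, p}"
  have cB0: "c \<notin> B0" unfolding B0_def using c_notin_blk[OF i0k(1)] by blast
  have finB0: "finite B0" unfolding B0_def by (rule blk_fin)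
  have cX: "card X = n0 + 1" unfolding X_def n0_def nb_def B0_def[symmetric] using cB0 finB0 by simp
  have Xa: "X \<subseteq> \<alpha>" unfolding X_def B0_def using c_in by auto
  have finX: "finite X" using Xa fin finite_subset by auto
  have fb: "finite \<beta>" "\<beta> \<noteq> {}" unfolding \<beta>_def using fin eqpts_fin by auto
  have "card \<beta> \<le> card (\<alpha> - X) + card (eqpts (lo i0) (hi i0) (n0 - 1)) + card {mid, p}"
    unfolding \<beta>_def by (meson add_le_mono card_Un_le order_trans order_refl)
  also have "\<dots> \<le> (card \<alpha> - (n0 + 1)) + (n0 - 1) + 2"
    using card_Diff_subset[OF finX Xa] cX eqpts_fin(2) card_insert_le_m1 by (intro add_mono) (auto simp: card_insert_if)
  also have "\<dots> = card \<alpha>" using card_mono[OF fin Xa] cX n02 by linarith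
  finally have cb: "card \<beta> \<le> n" using card_le by linarith
  have DA: "Dr \<alpha> = (\<Sum>i<i0. wt (Suc i) * E \<alpha> (Suc i)) + wt (Suc i0) * E \<alpha> (Suc i0) + Qt k c"
  proof -
    have "(\<Sum>j. wt (Suc (j + Suc i0)) * E \<alpha> (Suc (j + Suc i0))) = Qt k c" using tail_alpha i0k(2) by simp
    thus ?thesis using Dr_split[OF fin ne, of i0] tail_Suc[OF fin ne, of i0] by simp
  qed
  have DB: "Dr \<beta> = (\<Sum>i<i0. wt (Suc i) * E \<beta> (Suc i)) + wt (Suc i0) * E \<beta> (Suc i0) + wt (Suc k) * E \<beta> (Suc k)
      + (\<Sum>j. wt (Suc (j + Suc k)) * E \<beta> (Suc (j + Suc k)))"
    using Dr_split[OF fb, of i0] tail_Suc[OF fb, of i0] tail_Suc[OF fb, of "Suc i0"] i0k(2) by simp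
  have sfin: "(\<Sum>i<i0. wt (Suc i) * E \<beta> (Suc i)) \<le> (\<Sum>i<i0. wt (Suc i) * E \<alpha> (Suc i))"
  proof (intro sum_mono mult_left_mono)
    fix i assume "i \<in> {..<i0}"
    hence i: "i < i0" by simp
    have "\<alpha> \<inter> J (Suc i) \<subseteq> \<beta>"
    proof
      fix x assume x: "x \<in> \<alpha> \<inter> J (Suc i)"
      have "x \<notin> B0" unfolding B0_def using x blk_disj[of i i0] i by auto
      moreover have "x \<noteq> c" using x c_notin_blk[of i] i i0k by auto
      ultimately show "x \<in> \<beta>" unfolding \<beta>_def X_def using x by auto
    qed
    thus "E \<beta> (Suc i) \<le> E \<alpha> (Suc i)" using keep_block[OF fb(1)] i i0k by auto
  qed (simp add: wt_def)
  have b0: "E \<beta> (Suc i0) \<le> hh i0 ^ 3 / (12 * (real (n0 - 1))\<^sup>2)"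
    using n02 by (intro eq_block fb) (auto simp: \<beta>_def)
  have bk: "E \<beta> (Suc k) \<le> hh k ^ 3 / 12"
  proof -
    have "E \<beta> (Suc k) \<le> Isq (lo k) (hi k) mid"
      using Fm_le[OF fb(1), of mid] by (intro E_le_sq fb) (auto simp: \<beta>_def)
    also have "\<dots> = hh k ^ 3 / 12" unfolding mid_def Isq_mid using hi_eq[of k] by simp
    finally show ?thesis .
  qed
  have bt: "(\<Sum>j. wt (Suc (j + Suc k)) * E \<beta> (Suc (j + Suc k))) \<le> 25/204 * (1/18)^(Suc k)"
  proof -
    have "(\<Sum>j. wt (Suc (j + Suc k)) * E \<beta> (Suc (j + Suc k))) \<le> Qt (Suc k) p"
      using Fm_le[OF fb(1), of p] by (intro tail_le_Qt fb) (auto simp: \<beta>_def)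
    thus ?thesis unfolding p_def Qt_opt .
  qed
  have a0: "hh i0 ^ 3 / (12 * (real n0)\<^sup>2) \<le> E \<alpha> (Suc i0)" unfolding n0_def by (rule E_block_lb[OF i0k(1)])
  have at: "25/204 * (1/18)^k \<le> Qt k c" by (rule Qt_lower)
  define Y :: real where "Y = (1/18)^k"
  have Y0: "0 < Y" unfolding Y_def by simp
  have w0: "wt (Suc i0) * hh i0 ^ 3 = Y" unfolding Y_def using wt_hh3[of i0] i0k(2) by simp
  have wk: "wt (Suc k) * hh k ^ 3 = Y / 18" unfolding Y_def using wt_hh3[of k] by simp
  have wpos: "0 \<le> wt (Suc i0)" "0 \<le> wt (Suc k)" by (auto simp: wt_def)
  have e1: "wt (Suc i0) * E \<beta> (Suc i0) - wt (Suc i0) * E \<alpha> (Suc i0) \<le>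
      Y / (12 * (real (n0 - 1))\<^sup>2) - Y / (12 * (real n0)\<^sup>2)"
  proof -
    have "wt (Suc i0) * E \<beta> (Suc i0) \<le> wt (Suc i0) * (hh i0 ^ 3 / (12 * (real (n0 - 1))\<^sup>2))"
      using b0 wpos by (intro mult_left_mono) auto
    also have "\<dots> = Y / (12 * (real (n0 - 1))\<^sup>2)" using w0 by (simp add: field_simps)
    finally have 1: "wt (Suc i0) * E \<beta> (Suc i0) \<le> Y / (12 * (real (n0 - 1))\<^sup>2)" .
    have "wt (Suc i0) * (hh i0 ^ 3 / (12 * (real n0)\<^sup>2)) \<le> wt (Suc i0) * E \<alpha> (Suc i0)"
      using a0 wpos by (intro mult_left_mono) auto
    moreover have "wt (Suc i0) * (hh i0 ^ 3 / (12 * (real n0)\<^sup>2)) = Y / (12 * (real n0)\<^sup>2)" using w0 by (simp add: field_simps)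
    ultimately show ?thesis using 1 by linarith
  qed
  have e2: "Y / (12 * (real (n0 - 1))\<^sup>2) - Y / (12 * (real n0)\<^sup>2) \<le> Y * (3/4) / 12"
  proof -
    have "Y / (12 * (real (n0 - 1))\<^sup>2) - Y / (12 * (real n0)\<^sup>2) = Y * (1/(real (n0 - 1))\<^sup>2 - 1/(real n0)\<^sup>2) / 12"
      by (simp add: field_simps)
    also have "\<dots> \<le> Y * (3/4) / 12" using frac_bound[OF n02] Y0 by (intro divide_right_mono mult_left_mono) auto
    finally show ?thesis .
  qed
  have e3: "wt (Suc k) * E \<beta> (Suc k) \<le> Y / 216"
  proof -
    have "wt (Suc k) * E \<beta> (Suc k) \<le> wt (Suc k) * (hh k ^ 3 / 12)" using bk wpos by (intro mult_left_mono) auto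
    also have "\<dots> = Y / 216" using wk by (simp add: field_simps)
    finally show ?thesis .
  qed
  have e4: "(1/18::real)^(Suc k) = Y / 18" unfolding Y_def by simp
  have "Dr \<beta> - Dr \<alpha> \<le> Y * (3/4) / 12 + Y / 216 + 25/204 * (Y / 18) - 25/204 * Y"
    using DA DB sfin e1 e2 e3 bt at e4 Y_def by linarith
  also have "\<dots> < 0" using Y0 by simp
  finally have "Dr \<beta> < Dr \<alpha>" by linarith
  thus False using opt_Dr[OF opt fb cb] by linarith
qed

end

context S begin

lemma case_b1:
  assumes i: "Suc (Suc i) < k" and le: "nb i \<le> nb (Suc i)" and q2: "2 \<le> nb (Suc i)"
  shows False
proof -
  define p where "p = nb i"
  define q where "q = nb (Suc i)"
  have ik: "i < k" "Suc i < k" using i by auto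
  have p1: "1 \<le> p" unfolding p_def by (rule nb_pos[OF ik(1)])
  have pq: "p \<le> q" "2 \<le> q" using le q2 unfolding p_def q_def by auto
  define B1 where "B1 = \<alpha> \<inter> J (Suc i)"
  define B2 where "B2 = \<alpha> \<inter> J (Suc (Suc i))"
  define X where "X = B1 \<union> B2"
  define \<beta> where "\<beta> = (\<alpha> - X) \<union> eqpts (lo i) (hi i) (p + 1) \<union> eqpts (lo (Suc i)) (hi (Suc i)) (q - 1)"
  have d12: "B1 \<inter> B2 = {}" unfolding B1_def B2_def by (rule blk_disj) simp
  have cX: "card X = p + q" unfolding X_def p_def q_def nb_def B1_def[symmetric] B2_def[symmetric]
    using d12 blk_fin by (simp add: B1_def B2_def card_Un_disjoint)
  have Xa: "X \<subseteq> \<alpha>" unfolding X_def B1_def B2_def by auto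
  have finX: "finite X" using Xa fin finite_subset by auto
  have fb: "finite \<beta>" "\<beta> \<noteq> {}" unfolding \<beta>_def using fin eqpts_fin eqpts_ne[of "p+1"] by auto
  have "card \<beta> \<le> card (\<alpha> - X) + card (eqpts (lo i) (hi i) (p + 1)) + card (eqpts (lo (Suc i)) (hi (Suc i)) (q - 1))"
    unfolding \<beta>_def by (meson add_le_mono card_Un_le order_trans order_refl)
  also have "\<dots> \<le> (card \<alpha> - (p + q)) + (p + 1) + (q - 1)"
    using card_Diff_subset[OF finX Xa] cX eqpts_fin(2) by (intro add_mono) auto
  also have "\<dots> = card \<alpha>" using card_mono[OF fin Xa] cX pq by linarith
  finally have cb: "card \<beta> \<le> n" using card_le by linarith
  have cnX: "c \<notin> X" unfolding X_def B1_def B2_def using c_notin_blk ik by blast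
  show False
  proof (rule better2[OF fb cb, of "{i, Suc i}"])
    show "finite {i, Suc i}" by simp
    fix i' assume i': "i' \<notin> {i, Suc i}"
    show "E \<beta> (Suc i') \<le> E \<alpha> (Suc i')"
    proof (cases "i' < k")
      case True
      have "\<alpha> \<inter> J (Suc i') \<subseteq> \<beta>"
      proof
        fix x assume x: "x \<in> \<alpha> \<inter> J (Suc i')"
        have "x \<notin> X" unfolding X_def B1_def B2_def using x blk_disj[of i' i] blk_disj[of i' "Suc i"] i' by auto
        thus "x \<in> \<beta>" unfolding \<beta>_def using x by auto
      qed
      thus ?thesis using keep_block[OF fb(1) _ True] by blast
    next
      case False
      have "c \<in> \<beta>" unfolding \<beta>_def using cnX c_in by auto
      thus ?thesis using keep_tail[OF fb(1)] False by auto
    qed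
  next
    define Y where "Y = (1/18::real)^(Suc i)"
    have Y0: "0 < Y" unfolding Y_def by simp
    have w1: "wt (Suc i) * hh i ^ 3 = Y" unfolding Y_def by (rule wt_hh3)
    have w2: "wt (Suc (Suc i)) * hh (Suc i) ^ 3 = Y / 18" unfolding Y_def using wt_hh3[of "Suc i"] by simp
    have wpos: "0 \<le> wt (Suc i)" "0 \<le> wt (Suc (Suc i))" by (auto simp: wt_def)
    have a1: "hh i ^ 3 / (12 * (real p)\<^sup>2) \<le> E \<alpha> (Suc i)" unfolding p_def by (rule E_block_lb[OF ik(1)])
    have a2: "hh (Suc i) ^ 3 / (12 * (real q)\<^sup>2) \<le> E \<alpha> (Suc (Suc i))" unfolding q_def by (rule E_block_lb[OF ik(2)])
    have b1: "E \<beta> (Suc i) \<le> hh i ^ 3 / (12 * (real (p + 1))\<^sup>2)"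
      by (intro eq_block fb) (auto simp: \<beta>_def)
    have b2: "E \<beta> (Suc (Suc i)) \<le> hh (Suc i) ^ 3 / (12 * (real (q - 1))\<^sup>2)"
      using pq by (intro eq_block fb) (auto simp: \<beta>_def)
    have t1: "Y * (1/(real p)\<^sup>2 - 1/(real p + 1)\<^sup>2) / 12 \<le> wt (Suc i) * (E \<alpha> (Suc i) - E \<beta> (Suc i))"
    proof -
      have "wt (Suc i) * (hh i ^ 3 / (12 * (real p)\<^sup>2) - hh i ^ 3 / (12 * (real (p + 1))\<^sup>2)) \<le> wt (Suc i) * (E \<alpha> (Suc i) - E \<beta> (Suc i))"
        using a1 b1 wpos by (intro mult_left_mono) auto
      moreover have "wt (Suc i) * (hh i ^ 3 / (12 * (real p)\<^sup>2) - hh i ^ 3 / (12 * (real (p + 1))\<^sup>2)) =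
          (wt (Suc i) * hh i ^ 3) * (1/(real p)\<^sup>2 - 1/(real p + 1)\<^sup>2) / 12" by (simp add: field_simps)
      ultimately show ?thesis unfolding w1 by linarith
    qed
    have t2: "- (Y / 18) * (1/(real (q - 1))\<^sup>2 - 1/(real (q - 1) + 1)\<^sup>2) / 12 \<le> wt (Suc (Suc i)) * (E \<alpha> (Suc (Suc i)) - E \<beta> (Suc (Suc i)))"
    proof -
      have "wt (Suc (Suc i)) * (hh (Suc i) ^ 3 / (12 * (real q)\<^sup>2) - hh (Suc i) ^ 3 / (12 * (real (q - 1))\<^sup>2)) \<le> wt (Suc (Suc i)) * (E \<alpha> (Suc (Suc i)) - E \<beta> (Suc (Suc i)))"
        using a2 b2 wpos by (intro mult_left_mono) auto
      moreover have "real (q - 1) + 1 = real q" using pq by simp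
      moreover have "wt (Suc (Suc i)) * (hh (Suc i) ^ 3 / (12 * (real q)\<^sup>2) - hh (Suc i) ^ 3 / (12 * (real (q - 1))\<^sup>2)) =
          - (wt (Suc (Suc i)) * hh (Suc i) ^ 3) * (1/(real (q - 1))\<^sup>2 - 1/(real q)\<^sup>2) / 12" by (simp add: field_simps)
      ultimately show ?thesis unfolding w2 by simp
    qed
    have gpq: "gg (real (q - 1)) < 18 * gg (real p)" using ineq_b1[OF p1 pq] .
    have z0: "0 < Y * (gg (real p) - gg (real (q - 1)) / 18) / 12"
      using gpq Y0 by (intro divide_pos_pos mult_pos_pos) auto
    have z1: "Y * (gg (real p) - gg (real (q - 1)) / 18) / 12 =
        Y * (1/(real p)\<^sup>2 - 1/(real p + 1)\<^sup>2) / 12 + (- (Y / 18) * (1/(real (q - 1))\<^sup>2 - 1/(real (q - 1) + 1)\<^sup>2) / 12)"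
      unfolding gg_def by (simp add: field_simps)
    have s2: "(\<Sum>i'\<in>{i, Suc i}. wt (Suc i') * (E \<alpha> (Suc i') - E \<beta> (Suc i'))) =
      wt (Suc i) * (E \<alpha> (Suc i) - E \<beta> (Suc i)) + wt (Suc (Suc i)) * (E \<alpha> (Suc (Suc i)) - E \<beta> (Suc (Suc i)))" by simp
    show "0 < (\<Sum>i'\<in>{i, Suc i}. wt (Suc i') * (E \<alpha> (Suc i') - E \<beta> (Suc i')))"
      using t1 t2 z0 z1 s2 by linarith
  qed
qed

lemma case_b2:
  assumes i: "Suc (Suc i) < k" and one: "nb i = 1"
  shows False
proof -
  define i1 where "i1 = k - 1"
  have ik: "i < k" "i < i1" "i1 < k" "Suc i1 = k" using i unfolding i1_def by auto
  have n1: "nb i1 = 1" unfolding i1_def by (rule last_one)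
  define B1 where "B1 = \<alpha> \<inter> J (Suc i)"
  define B2 where "B2 = \<alpha> \<inter> J (Suc i1)"
  define X where "X = B1 \<union> B2 \<union> {c}"
  define p' where "p' = 1 - (1/3::real)^i1/2"
  define \<beta> where "\<beta> = (\<alpha> - X) \<union> eqpts (lo i) (hi i) 2 \<union> {p'}"
  have d12: "B1 \<inter> B2 = {}" unfolding B1_def B2_def using ik by (intro blk_disj) simp
  have cB: "c \<notin> B1 \<union> B2" unfolding B1_def B2_def using c_notin_blk ik by blast
  have cX: "card X = 3" unfolding X_def using d12 cB blk_fin one n1
    by (simp add: B1_def B2_def card_Un_disjoint nb_def)
  have Xa: "X \<subseteq> \<alpha>" unfolding X_def B1_def B2_def using c_in by auto
  have finX: "finite X" using Xa fin finite_subset by auto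
  have fb: "finite \<beta>" "\<beta> \<noteq> {}" unfolding \<beta>_def using fin eqpts_fin by auto
  have "card \<beta> \<le> card (\<alpha> - X) + card (eqpts (lo i) (hi i) 2) + card {p'}"
    unfolding \<beta>_def by (meson add_le_mono card_Un_le order_trans order_refl)
  also have "\<dots> \<le> (card \<alpha> - 3) + 2 + 1"
    using card_Diff_subset[OF finX Xa] cX eqpts_fin(2) by (intro add_mono) auto
  also have "\<dots> = card \<alpha>" using card_mono[OF fin Xa] cX by linarith
  finally have cb: "card \<beta> \<le> n" using card_le by linarith
  have DA: "Dr \<alpha> = (\<Sum>j<i1. wt (Suc j) * E \<alpha> (Suc j)) + wt (Suc i1) * E \<alpha> (Suc i1) + Qt k c"
  proof -
    have "(\<Sum>j. wt (Suc (j + Suc i1)) * E \<alpha> (Suc (j + Suc i1))) = Qt k c" using tail_alpha ik(4) by simp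
    thus ?thesis using Dr_split[OF fin ne, of i1] tail_Suc[OF fin ne, of i1] by simp
  qed
  have DB: "Dr \<beta> = (\<Sum>j<i1. wt (Suc j) * E \<beta> (Suc j)) + (\<Sum>j. wt (Suc (j + i1)) * E \<beta> (Suc (j + i1)))"
    by (rule Dr_split[OF fb])
  have tb: "(\<Sum>j. wt (Suc (j + i1)) * E \<beta> (Suc (j + i1))) \<le> 25/204 * (1/18)^i1"
  proof -
    have "(\<Sum>j. wt (Suc (j + i1)) * E \<beta> (Suc (j + i1))) \<le> Qt i1 p'"
      using Fm_le[OF fb(1), of p'] by (intro tail_le_Qt fb) (auto simp: \<beta>_def)
    thus ?thesis unfolding p'_def Qt_opt .
  qed
  define Y where "Y = (1/18::real)^k"
  have Y0: "0 < Y" unfolding Y_def by simp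
  define d where "d = (1/18::real)^(Suc i) / 16"
  have sfin: "(\<Sum>j<i1. wt (Suc j) * E \<beta> (Suc j)) \<le> (\<Sum>j<i1. wt (Suc j) * E \<alpha> (Suc j)) - d"
  proof (rule sum_one_change)
    show "finite {..<i1}" by simp
    show "i \<in> {..<i1}" using ik by simp
    fix j assume j: "j \<in> {..<i1}" "j \<noteq> i"
    have "\<alpha> \<inter> J (Suc j) \<subseteq> \<beta>"
    proof
      fix x assume x: "x \<in> \<alpha> \<inter> J (Suc j)"
      have "x \<notin> X" unfolding X_def B1_def B2_def using x blk_disj[of j i] blk_disj[of j i1] j c_notin_blk[of j] ik by auto
      thus "x \<in> \<beta>" unfolding \<beta>_def using x by auto
    qed
    hence "E \<beta> (Suc j) \<le> E \<alpha> (Suc j)" using keep_block[OF fb(1)] j ik by auto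
    thus "wt (Suc j) * E \<beta> (Suc j) \<le> wt (Suc j) * E \<alpha> (Suc j)" by (intro mult_left_mono) (auto simp: wt_def)
  next
    have wpos: "0 \<le> wt (Suc i)" by (simp add: wt_def)
    have a1: "hh i ^ 3 / 12 \<le> E \<alpha> (Suc i)" using E_block_lb[OF ik(1)] one by simp
    have "eqpts (lo i) (hi i) 2 \<subseteq> \<beta>" unfolding \<beta>_def by auto
    hence b1: "E \<beta> (Suc i) \<le> hh i ^ 3 / 48" using eq_block[OF fb(1), of i 2] by simp
    have "wt (Suc i) * E \<beta> (Suc i) \<le> wt (Suc i) * (hh i ^ 3 / 48)" using b1 wpos by (intro mult_left_mono)
    moreover have "wt (Suc i) * (hh i ^ 3 / 12) \<le> wt (Suc i) * E \<alpha> (Suc i)" using a1 wpos by (intro mult_left_mono)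
    moreover have "wt (Suc i) * (hh i ^ 3 / 48) = (1/18)^(Suc i) / 48" using wt_hh3[of i] by (simp add: field_simps)
    moreover have "wt (Suc i) * (hh i ^ 3 / 12) = (1/18)^(Suc i) / 12" using wt_hh3[of i] by (simp add: field_simps)
    ultimately show "wt (Suc i) * E \<beta> (Suc i) \<le> wt (Suc i) * E \<alpha> (Suc i) - d" unfolding d_def by linarith
  qed
  have ai1: "Y / 12 \<le> wt (Suc i1) * E \<alpha> (Suc i1)"
  proof -
    have "hh i1 ^ 3 / 12 \<le> E \<alpha> (Suc i1)" using E_block_lb[OF ik(3)] n1 by simp
    hence "wt (Suc i1) * (hh i1 ^ 3 / 12) \<le> wt (Suc i1) * E \<alpha> (Suc i1)" by (intro mult_left_mono) (auto simp: wt_def)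
    moreover have "wt (Suc i1) * (hh i1 ^ 3 / 12) = Y / 12" unfolding Y_def using wt_hh3[of i1] ik(4) by (simp add: field_simps)
    ultimately show ?thesis by simp
  qed
  have at: "25/204 * Y \<le> Qt k c" unfolding Y_def by (rule Qt_lower)
  have "k - i1 = 1" using ik by simp
  hence Yi1: "(1/18::real)^i1 = 18 * Y" unfolding Y_def using pow18[of i1] ik by simp
  have dY: "324 * Y / 16 \<le> d"
  proof -
    have "(1/18::real)^(k - 2) \<le> (1/18)^(Suc i)" using i by (intro power_decreasing) auto
    moreover have "(1/18::real)^(k - 2) = 324 * Y" unfolding Y_def using pow18[of "k - 2"] i by simp
    ultimately show ?thesis unfolding d_def by simp
  qed
  have "Dr \<beta> - Dr \<alpha> \<le> - 324 * Y / 16 + 25/204 * (18 * Y) - Y / 12 - 25/204 * Y"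
    using DA DB sfin tb ai1 at Yi1 dY by linarith
  also have "\<dots> < 0" using Y0 by simp
  finally have "Dr \<beta> < Dr \<alpha>" by linarith
  thus False using opt_Dr[OF opt fb cb] by linarith
qed

lemma strict_dec: "Suc (Suc i) < k \<Longrightarrow> nb (Suc i) < nb i"
proof (rule ccontr)
  assume i: "Suc (Suc i) < k" and "\<not> nb (Suc i) < nb i"
  hence le: "nb i \<le> nb (Suc i)" by simp
  show False
  proof (cases "2 \<le> nb (Suc i)")
    case True thus False using case_b1[OF i le] by blast
  next
    case False
    hence "nb (Suc i) = 1" using nb_pos[of "Suc i"] i by linarith
    hence "nb i = 1" using le nb_pos[of i] i by linarith
    thus False using case_b2[OF i] by blast
  qed
qed

end

theorem lemma4p9:
  fixes n k :: nat and \<alpha> :: "real set"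
  assumes "n \<ge> 2"
    and "optimal_n_means n \<alpha>"
    and "k \<ge> 1"
    and "\<forall>j\<in>{1..k}. \<alpha> \<inter> J j \<noteq> {}"
    and "card (\<alpha> \<inter> {1 - 1 / 3 ^ k .. 1}) = 1"
    and "k \<ge> 2"
  shows "(\<forall>j. 1 \<le> j \<and> j + 1 < k \<longrightarrow> card (\<alpha> \<inter> J j) > card (\<alpha> \<inter> J (j + 1)))
       \<and> card (\<alpha> \<inter> J (k - 1)) \<ge> card (\<alpha> \<inter> J k)
       \<and> card (\<alpha> \<inter> J k) = 1"
proof -
  interpret S n k \<alpha> by unfold_locales (use assms in auto)
  have last: "card (\<alpha> \<inter> J k) = 1"
    using last_one assms(3) unfolding nb_def by (metis Suc_diff_1 less_le_trans zero_less_one)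
  have A: "\<forall>j. 1 \<le> j \<and> j + 1 < k \<longrightarrow> card (\<alpha> \<inter> J j) > card (\<alpha> \<inter> J (j + 1))"
  proof (intro allI impI)
    fix j assume j: "1 \<le> j \<and> j + 1 < k"
    then obtain i where ij: "j = Suc i" by (metis Suc_le_D One_nat_def)
    have "nb (Suc i) < nb i" using strict_dec j ij by simp
    thus "card (\<alpha> \<inter> J j) > card (\<alpha> \<inter> J (j + 1))" unfolding nb_def ij by simp
  qed
  have B: "card (\<alpha> \<inter> J (k - 1)) \<ge> card (\<alpha> \<inter> J k)"
  proof -
    have "1 \<le> nb (k - 2)" using assms(6) by (intro nb_pos) simp
    moreover have "Suc (k - 2) = k - 1" using assms(6) by simp
    ultimately have "1 \<le> card (\<alpha> \<inter> J (k - 1))" unfolding nb_def by simp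
    thus ?thesis using last by simp
  qed
  show ?thesis using A B last by blast
qed

end
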